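(* Let $L$ be a finite lattice with minimum $\mathbf{0}$ and $F$ a sheaf of finite-dimensional vector spaces on $L$. Then $$\chi\,\mathrm{HS}_*(L\setminus\mathbf{0};F)=-\sum_{x\in L\setminus\mathbf{0}}\mu_L(\mathbf{0},x)\dim F(x).$$
   Context: $\chi\,\mathrm{HS}_*(P;F)=\sum_n(-1)^n\dim\mathrm{HS}_n(P;F)$. A sheaf $F$ assigns a vector space $F(x)$ to each element and a linear map $F^y_x:F(y)\to F(x)$ to each $x\le y$, functorially. Sheaf homology $\mathrm{HS}_*(P;F)$ of a finite poset $P$: homology of $S_n(P;F)=\bigoplus_\sigma F(x_0)$ over chains $\sigma=(x_n\le\cdots\le x_0)$ with $d(s_\sigma)=F^{x_0}_{x_1}(s)_{d_0\sigma}+\sum_{i=1}^n(-1)^is_{d_i\sigma}$ ($d_i\sigma$ omits $x_i$). $L\setminus\mathbf{0}$ is $L$ with its minimum removed. Möbius function: $\mu_L(x,x)=1$, $\mu_L(x,y)=-\sum_{x\le z<y}\mu_L(x,z)$ for $x<y$. *)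

theory Defs
  imports Complex_Main "HOL-Library.Function_Algebras"
begin

function mobius :: "'a::{finite,order} \<Rightarrow> 'a \<Rightarrow> int" where
  "mobius x y =
     (if x = y then 1
      else if x < y then - (\<Sum>z\<in>{z. x \<le> z \<and> z < y}. mobius x z)
      else 0)"
  by auto
termination
  by (relation "measure (\<lambda>(x,y). card {w. w < y})")
     (auto intro!: psubset_card_mono dest: less_trans)

text \<open>All stalks F x are subspaces of one ambient vector space of type 'v over the
field 'k (scalar multiplication scale); R y x is the restriction map F^y_x from F y
to F x for x <= y.\<close>

definition is_sheaf ::
  "('k::field \<Rightarrow> 'v::ab_group_add \<Rightarrow> 'v) \<Rightarrow> 'a::order set \<Rightarrow> ('a \<Rightarrow> 'v set)
     \<Rightarrow> ('a \<Rightarrow> 'a \<Rightarrow> 'v \<Rightarrow> 'v) \<Rightarrow> bool" where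
  "is_sheaf scale P F R \<longleftrightarrow>
     vector_space scale \<and>
     (\<forall>x\<in>P. Modules.module.subspace scale (F x)) \<and>
     (\<forall>x\<in>P. \<forall>y\<in>P. x \<le> y \<longrightarrow>
        (\<forall>v\<in>F y. R y x v \<in> F x) \<and>
        (\<forall>v\<in>F y. \<forall>w\<in>F y. R y x (v + w) = R y x v + R y x w) \<and>
        (\<forall>a. \<forall>v\<in>F y. R y x (scale a v) = scale a (R y x v))) \<and>
     (\<forall>x\<in>P. \<forall>v\<in>F x. R x x v = v) \<and>
     (\<forall>x\<in>P. \<forall>y\<in>P. \<forall>z\<in>P. x \<le> y \<longrightarrow> y \<le> z \<longrightarrow>
        (\<forall>v\<in>F z. R y x (R z y v) = R z x v))"

definition finite_dim_stalks ::
  "('k::field \<Rightarrow> 'v::ab_group_add \<Rightarrow> 'v) \<Rightarrow> 'a set \<Rightarrow> ('a \<Rightarrow> 'v set) \<Rightarrow> bool" where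
  "finite_dim_stalks scale P F \<longleftrightarrow>
     (\<forall>x\<in>P. \<exists>B. finite B \<and> B \<subseteq> F x \<and> Modules.module.span scale B = F x)"

text \<open>An n-chain x_n <= ... <= x_0 of P is represented by the list [x_0, x_1, ..., x_n].\<close>

definition chains :: "'a::order set \<Rightarrow> nat \<Rightarrow> 'a list set" where
  "chains P n = {\<sigma>. length \<sigma> = Suc n \<and> set \<sigma> \<subseteq> P \<and> sorted_wrt (\<lambda>a b. b \<le> a) \<sigma>}"

definition face :: "nat \<Rightarrow> 'a list \<Rightarrow> 'a list" where
  "face i \<sigma> = take i \<sigma> @ drop (Suc i) \<sigma>"

text \<open>S_n(P;F) = direct sum over n-chains sigma of F(x_0), realised as functions on
lists that vanish off the n-chains.\<close>
definition chain_space :: "'a::order set \<Rightarrow> ('a \<Rightarrow> 'v::zero set) \<Rightarrow> nat \<Rightarrow> ('a list \<Rightarrow> 'v) set" where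
  "chain_space P F n =
     {c. \<forall>\<sigma>. (\<sigma> \<in> chains P n \<longrightarrow> c \<sigma> \<in> F (hd \<sigma>)) \<and> (\<sigma> \<notin> chains P n \<longrightarrow> c \<sigma> = 0)}"

definition bdry ::
  "('k::field \<Rightarrow> 'v::ab_group_add \<Rightarrow> 'v) \<Rightarrow> 'a::order set \<Rightarrow> ('a \<Rightarrow> 'a \<Rightarrow> 'v \<Rightarrow> 'v)
     \<Rightarrow> nat \<Rightarrow> ('a list \<Rightarrow> 'v) \<Rightarrow> ('a list \<Rightarrow> 'v)" where
  "bdry scale P R n c = (\<lambda>\<tau>.
     if n = 0 then 0
     else (\<Sum>\<sigma>\<in>chains P n. \<Sum>i\<in>{0..n}.
             if face i \<sigma> = \<tau> then
               (if i = 0 then R (\<sigma> ! 0) (\<sigma> ! 1) (c \<sigma>) else scale ((-1) ^ i) (c \<sigma>))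
             else 0))"

definition fscale :: "('k \<Rightarrow> 'v \<Rightarrow> 'v) \<Rightarrow> 'k \<Rightarrow> ('a list \<Rightarrow> 'v) \<Rightarrow> ('a list \<Rightarrow> 'v)" where
  "fscale scale a c = (\<lambda>\<sigma>. scale a (c \<sigma>))"

definition HS_dim ::
  "('k::field \<Rightarrow> 'v::ab_group_add \<Rightarrow> 'v) \<Rightarrow> 'a::order set \<Rightarrow> ('a \<Rightarrow> 'v set)
     \<Rightarrow> ('a \<Rightarrow> 'a \<Rightarrow> 'v \<Rightarrow> 'v) \<Rightarrow> nat \<Rightarrow> int" where
  "HS_dim scale P F R n =
     int (Vector_Spaces.vector_space.dim (fscale scale) {c \<in> chain_space P F n. bdry scale P R n c = 0})
     - int (Vector_Spaces.vector_space.dim (fscale scale) (bdry scale P R (Suc n) ` chain_space P F (Suc n)))"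

text \<open>Euler characteristic: sum_n (-1)^n dim HS_n (a finite sum, over the nonzero terms).\<close>
definition euler_char_HS ::
  "('k::field \<Rightarrow> 'v::ab_group_add \<Rightarrow> 'v) \<Rightarrow> 'a::order set \<Rightarrow> ('a \<Rightarrow> 'v set)
     \<Rightarrow> ('a \<Rightarrow> 'a \<Rightarrow> 'v \<Rightarrow> 'v) \<Rightarrow> int" where
  "euler_char_HS scale P F R =
     (\<Sum>n\<in>{n. HS_dim scale P F R n \<noteq> 0}. (-1) ^ n * HS_dim scale P F R n)"

end

theory Submission
  imports Defs
begin

section \<open>List combinatorics\<close>

lemma length_face[simp]: "i < length s \<Longrightarrow> length (face i s) = length s - 1"
  by (simp add: face_def)

lemma face_nth: "i < length s \<Longrightarrow> k < length s - 1 \<Longrightarrow>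
    face i s ! k = (if k < i then s ! k else s ! Suc k)"
  by (auto simp: face_def nth_append min_def)

lemma face_0: "face 0 s = tl s"
  by (simp add: face_def drop_Suc)

lemma set_face: "set (face i s) \<subseteq> set s"
  unfolding face_def by (auto dest: in_set_takeD in_set_dropD)

lemma chains_nth: "s \<in> chains P n \<longleftrightarrow> length s = Suc n \<and> (\<forall>i<Suc n. s ! i \<in> P)
   \<and> (\<forall>i j. i < j \<longrightarrow> j < Suc n \<longrightarrow> s ! j \<le> s ! i)"
  unfolding chains_def sorted_wrt_iff_nth_less by (fastforce simp: subset_iff in_set_conv_nth)

lemma chains_finite: "finite (P::'a::{finite,order} set) \<Longrightarrow> finite (chains P n)"
proof -
  have "finite {xs::'a list. set xs \<subseteq> UNIV \<and> length xs = Suc n}"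
    by (rule finite_lists_length_eq) simp
  then show ?thesis by (rule finite_subset[rotated]) (auto simp: chains_def)
qed

lemma chain_le: "s \<in> chains P n \<Longrightarrow> a \<le> b \<Longrightarrow> b < Suc n \<Longrightarrow> s ! b \<le> s ! a"
  unfolding chains_nth by (cases "a = b") auto

lemma face_chain:
  assumes s: "s \<in> chains P (Suc n)" and i: "i \<le> Suc n"
  shows "face i s \<in> chains P n"
proof -
  have L: "length s = Suc (Suc n)" using s by (simp add: chains_nth)
  have il: "i < length s" using i L by simp
  show ?thesis unfolding chains_nth
  proof (intro conjI allI impI)
    show "length (face i s) = Suc n" using il L by simp
  next
    fix k assume "k < Suc n"
    then show "face i s ! k \<in> P" using s il L by (auto simp: face_nth chains_nth)
  next
    fix k l assume "k < l" "l < Suc n"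
    then show "face i s ! l \<le> face i s ! k" using s il L
      by (auto simp: face_nth chains_nth)
  qed
qed

lemma hd_face: "1 \<le> i \<Longrightarrow> i < length s \<Longrightarrow> hd (face i s) = hd s"
  by (cases s) (auto simp: face_def)

lemma hd_face0: "2 \<le> length s \<Longrightarrow> hd (face 0 s) = s ! 1"
  by (cases s; cases "tl s") (auto simp: face_def)

lemma face_face:
  assumes "j < i" "i < length s"
  shows "face j (face i s) = face (i - 1) (face j s)"
  using assms by (intro nth_equalityI) (auto simp: face_nth)

definition dup :: "nat \<Rightarrow> 'a list \<Rightarrow> 'a list" where
  "dup j s = take j s @ s ! j # drop j s"

lemma length_dup[simp]: "j < length s \<Longrightarrow> length (dup j s) = Suc (length s)"
  by (simp add: dup_def)

lemma dup_nth: "j < length s \<Longrightarrow> k < Suc (length s) \<Longrightarrow>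
    dup j s ! k = (if k \<le> j then s ! k else s ! (k - 1))"
  by (auto simp: dup_def nth_append min_def nth_Cons split: nat.split intro!: arg_cong[where f="(!) s"])

lemma dup_chain:
  assumes s: "s \<in> chains P n" and j: "j \<le> n"
  shows "dup j s \<in> chains P (Suc n)"
proof -
  have L: "length s = Suc n" using s by (simp add: chains_nth)
  have jl: "j < length s" using j L by simp
  show ?thesis unfolding chains_nth
  proof (intro conjI allI impI)
    show "length (dup j s) = Suc (Suc n)" using jl L by simp
  next
    fix k assume "k < Suc (Suc n)"
    then show "dup j s ! k \<in> P" using s jl L by (auto simp: dup_nth chains_nth)
  next
    fix k l assume kl: "k < l" "l < Suc (Suc n)"
    have e1: "dup j s ! l = s ! (if l \<le> j then l else l - 1)" using kl jl L by (simp add: dup_nth)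
    have e2: "dup j s ! k = s ! (if k \<le> j then k else k - 1)" using kl jl L by (simp add: dup_nth)
    have le: "(if k \<le> j then k else k - 1) \<le> (if l \<le> j then l else l - 1)"
      "(if l \<le> j then l else l - 1) < Suc n" using kl jl L by auto
    show "dup j s ! l \<le> dup j s ! k" unfolding e1 e2 using chain_le[OF s le] .
  qed
qed

lemma hd_dup: "j < length s \<Longrightarrow> hd (dup j s) = hd s"
  by (cases s; cases j) (auto simp: dup_def)

lemma set_dup: "j < length s \<Longrightarrow> set (dup j s) = set s"
proof -
  assume j: "j < length s"
  have "set s = set (take j s) \<union> set (drop j s)" by (metis append_take_drop_id set_append)
  moreover have "s ! j \<in> set (drop j s)" using j by (metis Cons_nth_drop_Suc list.set_intros(1))
  ultimately show ?thesis by (auto simp: dup_def)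
qed

lemma count_split: "count_list s x = count_list (take j s) x + count_list (drop j s) x"
  by (metis append_take_drop_id count_list_append)

lemma count_dup: "j < length s \<Longrightarrow>
    count_list (dup j s) x = count_list s x + (if s ! j = x then 1 else 0)"
  using count_split[of s x j] by (simp add: dup_def)

lemma count_face: "i < length s \<Longrightarrow>
    count_list (face i s) x = count_list s x - (if s ! i = x then 1 else 0)"
proof -
  assume j: "i < length s"
  have d: "drop i s = s ! i # drop (Suc i) s" using j by (simp add: Cons_nth_drop_Suc)
  show ?thesis using count_split[of s x i] unfolding d by (simp add: face_def)
qed

lemma face_dup_run:
  assumes ji: "j \<le> i" and il: "i < Suc (length s)" and jl: "j < length s"
    and run: "\<And>m. j \<le> m \<Longrightarrow> m < i \<Longrightarrow> s ! m = s ! j"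
  shows "face i (dup j s) = s"
proof (rule nth_equalityI)
  show "length (face i (dup j s)) = length s" using il jl by simp
next
  fix k assume k: "k < length (face i (dup j s))"
  then have k': "k < length s" using il jl by simp
  have f: "face i (dup j s) ! k = (if k < i then dup j s ! k else dup j s ! Suc k)"
    using face_nth[of i "dup j s" k] il jl k' by simp
  show "face i (dup j s) ! k = s ! k"
  proof (cases "k < i")
    case True
    show ?thesis
    proof (cases "k \<le> j")
      case True then show ?thesis using f \<open>k < i\<close> jl k' by (simp add: dup_nth)
    next
      case False
      then have "j \<le> k - 1" "k - 1 < i" "j \<le> k" using \<open>k < i\<close> by auto
      then have "s ! (k - 1) = s ! j" "s ! k = s ! j" using run[of "k - 1"] run[of k] \<open>k < i\<close> by blast+
      then show ?thesis using f \<open>k < i\<close> False jl k' by (simp add: dup_nth)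
    qed
  next
    case False
    then show ?thesis using f ji jl k' by (simp add: dup_nth)
  qed
qed

lemma face_dup_late:
  assumes ji: "Suc j < i" and il: "i < Suc (length s)"
  shows "face i (dup j s) = dup j (face (i - 1) s)"
proof (rule nth_equalityI)
  have jl: "j < length s" using ji il by simp
  have jl2: "j < length (face (i - 1) s)" using ji il by simp
  show "length (face i (dup j s)) = length (dup j (face (i - 1) s))" using il jl jl2 ji by simp
  fix k assume k: "k < length (face i (dup j s))"
  then have k': "k < length s" using il jl by simp
  have f: "face i (dup j s) ! k = (if k < i then dup j s ! k else dup j s ! Suc k)"
    using face_nth[of i "dup j s" k] il jl k' by simp
  have g: "dup j (face (i - 1) s) ! k = (if k \<le> j then face (i - 1) s ! k else face (i - 1) s ! (k - 1))"
    using dup_nth[OF jl2, of k] k' il ji by simp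
  have h: "m < length s - 1 \<Longrightarrow> face (i - 1) s ! m = (if m < i - 1 then s ! m else s ! Suc m)" for m
    using face_nth[of "i - 1" s m] il ji by simp
  consider "k \<le> j" | "j < k" "k < i" | "i \<le> k" by linarith
  then show "face i (dup j s) ! k = dup j (face (i - 1) s) ! k"
  proof cases
    case 1
    then have "k < i - 1" "k < length s - 1" using ji il by linarith+
    then show ?thesis using f g h[of k] jl k' ji il 1 by (simp add: dup_nth)
  next
    case 2
    then have "k - 1 < i - 1" "k - 1 < length s - 1" "\<not> k \<le> j" using ji il k' by linarith+
    then show ?thesis using f g h[of "k - 1"] jl k' ji il 2 by (simp add: dup_nth)
  next
    case 3
    then have "\<not> k - 1 < i - 1" "k - 1 < length s - 1" "\<not> k \<le> j" "Suc (k - 1) = k" "\<not> k < i"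
      using ji il k' by linarith+
    then show ?thesis using f g h[of "k - 1"] jl k' ji il 3 by (simp add: dup_nth)
  qed
qed

section \<open>Runs in descending chains\<close>

abbreviation desc :: "'a::order list \<Rightarrow> bool" where
  "desc s \<equiv> sorted_wrt (\<lambda>a b. b \<le> a) s"

lemma desc_nth: "desc s \<Longrightarrow> i \<le> j \<Longrightarrow> j < length s \<Longrightarrow> s ! j \<le> s ! i"
proof (cases "i = j")
  case False
  assume "desc s" "i \<le> j" "j < length s"
  then show ?thesis using sorted_wrt_nth_less[of _ s i j] False by simp
qed simp

lemma desc_between: "desc s \<Longrightarrow> a \<le> m \<Longrightarrow> m \<le> b \<Longrightarrow> b < length s \<Longrightarrow> s ! a = s ! b
   \<Longrightarrow> s ! m = s ! a"
proof -
  assume a: "desc s" "a \<le> m" "m \<le> b" "b < length s" "s ! a = s ! b"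
  have "s ! b \<le> s ! m" using desc_nth[OF a(1) a(3) a(4)] .
  moreover have "s ! m \<le> s ! a" using desc_nth[OF a(1) a(2)] a(3,4) by simp
  ultimately have "s ! b \<le> s ! m" "s ! m \<le> s ! a" by auto
  then show ?thesis using a(5) by (metis order.antisym)
qed

lemma sorted_count_prefix:
  "desc xs \<Longrightarrow> xs \<noteq> [] \<Longrightarrow> i < length xs \<Longrightarrow>
     (xs ! i = hd xs \<longleftrightarrow> i < count_list xs (hd xs))"
proof (induction xs arbitrary: i)
  case Nil then show ?case by simp
next
  case (Cons x ys)
  show ?case
  proof (cases "ys = []")
    case True then show ?thesis using Cons.prems by simp
  next
    case False
    have yx: "hd ys \<le> x" using Cons.prems(1) False by (cases ys) auto
    show ?thesis
    proof (cases "hd ys = x")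
      case True
      have IH: "\<And>i. i < length ys \<Longrightarrow> (ys ! i = x \<longleftrightarrow> i < count_list ys x)"
        using Cons.IH[of] Cons.prems(1) False True by auto
      show ?thesis using Cons.prems(3) IH by (cases i) auto
    next
      case hx: False
      have "\<forall>z\<in>set ys. z \<le> hd ys" using Cons.prems(1) False by (cases ys) auto
      then have "x \<notin> set ys" using yx hx by (metis order.antisym)
      then have c0: "count_list ys x = 0" by (simp add: count_list_0_iff)
      show ?thesis using Cons.prems(3) \<open>x \<notin> set ys\<close> c0
        by (cases i) (auto simp: nth_mem)
    qed
  qed
qed

lemma run_interval:
  assumes d: "desc s" and j: "j < length s" and nb: "\<And>k. k < j \<Longrightarrow> s ! k \<noteq> s ! j"
    and m: "m < length s"
  shows "s ! m = s ! j \<longleftrightarrow> j \<le> m \<and> m < j + count_list s (s ! j)"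
proof -
  let ?t = "drop j s"
  have t: "?t \<noteq> []" "hd ?t = s ! j" "desc ?t" using j d
    by (auto simp: hd_drop_conv_nth sorted_wrt_drop)
  have "s ! j \<notin> set (take j s)" using nb j by (auto simp: in_set_conv_nth)
  then have c: "count_list s (s ! j) = count_list ?t (s ! j)"
    by (metis append_take_drop_id count_list_0_iff count_list_append add_0)
  show ?thesis
  proof (cases "m < j")
    case True then show ?thesis using nb by auto
  next
    case False
    then have "s ! m = ?t ! (m - j)" using j by simp
    moreover have "m - j < length ?t" using m False by simp
    ultimately have "s ! m = s ! j \<longleftrightarrow> m - j < count_list s (s ! j)"
      using sorted_count_prefix[OF t(3) t(1), of "m - j"] t(2) c by simp
    then show ?thesis using False by linarith
  qed
qed

definition fr :: "'a list \<Rightarrow> nat" where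
  "fr s = (LEAST j. Suc j < length s \<and> s ! j = s ! Suc j)"

lemma nondistinct_adj:
  assumes "desc s" "\<not> distinct s"
  shows "\<exists>j. Suc j < length s \<and> s ! j = s ! Suc j"
proof -
  obtain a b where ab: "a < b" "b < length s" "s ! a = s ! b"
  proof -
    from assms(2) obtain a b where "a < length s" "b < length s" "a \<noteq> b" "s ! a = s ! b"
      unfolding distinct_conv_nth by blast
    then show ?thesis using that by (cases "a < b") (auto simp: not_less_iff_gr_or_eq)
  qed
  then have "s ! Suc a = s ! a" using desc_between[OF assms(1), of a "Suc a" b] by auto
  then show ?thesis using ab by (intro exI[of _ a]) auto
qed

lemma fr_ex:
  assumes "desc s" "\<not> distinct s"
  shows "Suc (fr s) < length s \<and> s ! fr s = s ! Suc (fr s)"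
proof -
  obtain j where "Suc j < length s \<and> s ! j = s ! Suc j" using nondistinct_adj[OF assms] by blast
  then show ?thesis unfolding fr_def by (rule LeastI)
qed

lemma fr_min:
  assumes "desc s" "\<not> distinct s" "k < fr s"
  shows "s ! k \<noteq> s ! Suc k"
proof -
  have "\<not> (Suc k < length s \<and> s ! k = s ! Suc k)" using assms(3) unfolding fr_def by (rule not_less_Least)
  then show ?thesis using assms(3) fr_ex[OF assms(1,2)] by auto
qed

lemma fr_eq:
  assumes "Suc j < length s" "s ! j = s ! Suc j" "\<And>k. k < j \<Longrightarrow> s ! k \<noteq> s ! Suc k"
  shows "fr s = j"
  unfolding fr_def
proof (rule Least_equality)
  show "Suc j < length s \<and> s ! j = s ! Suc j" using assms by auto
next
  fix y assume "Suc y < length s \<and> s ! y = s ! Suc y"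
  then show "j \<le> y" using assms(3)[of y] by (cases "y < j") auto
qed

lemma prefix_unique:
  assumes d: "desc s" and nb: "\<And>k. k < j \<Longrightarrow> s ! k \<noteq> s ! Suc k"
    and i: "i < j" and jl: "j < length s" and m: "m < length s" and e: "s ! m = s ! i"
  shows "m = i"
proof (rule ccontr)
  assume "m \<noteq> i"
  then consider "i < m" | "m < i" by linarith
  then show False
  proof cases
    case 1
    then have "s ! Suc i = s ! i" using desc_between[OF d, of i "Suc i" m] m e by auto
    then show False using nb[OF i] by simp
  next
    case 2
    have "i < length s" using i jl by simp
    then have "s ! Suc m = s ! m" using desc_between[OF d, of m "Suc m" i] 2 e by auto
    moreover have "m < j" using 2 i by simp
    ultimately show False using nb[of m] by simp
  qed
qed


declare sum.cl_ivl_Suc[simp del] sum.op_ivl_Suc[simp del]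

definition sg :: "nat \<Rightarrow> 'v::group_add \<Rightarrow> 'v" where
  "sg i u = (if even i then u else - u)"

lemma sg_add: "sg i ((u::'v::ab_group_add) + v) = sg i u + sg i v"
  by (simp add: sg_def)
lemma sg_0[simp]: "sg i 0 = 0" by (simp add: sg_def)
lemma sg_neg: "sg i (- u) = - sg i u" by (simp add: sg_def)
lemma sg_sg: "sg i (sg j u) = sg (i + j) u" by (simp add: sg_def)
lemma sg_Suc: "sg (Suc i) u = - sg i u" by (simp add: sg_def)
lemma sg_sum: "sg i (sum f A) = (\<Sum>a\<in>A. sg i (f a::'v::ab_group_add))"
  by (simp add: sg_def sum_negf)
lemma sg_sg_same[simp]: "sg i (sg i u) = u" by (simp add: sg_def)

lemma sum_apply_fun: "(sum f A) x = (\<Sum>a\<in>A. f a x)"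
  by (induction A rule: infinite_finite_induct) auto

lemma vsF: "vector_space scale \<Longrightarrow> vector_space (fscale scale)"
  unfolding vector_space_def fscale_def by (simp add: fun_eq_iff)

locale shf =
  fixes scale :: "'k::field \<Rightarrow> 'v::ab_group_add \<Rightarrow> 'v"
    and P :: "'a::{finite,order} set" and F :: "'a \<Rightarrow> 'v set"
    and R :: "'a \<Rightarrow> 'a \<Rightarrow> 'v \<Rightarrow> 'v"
  assumes sheaf: "is_sheaf scale P F R" and fd: "finite_dim_stalks scale P F"
begin

lemma vs: "vector_space scale" using sheaf by (simp add: is_sheaf_def)

sublocale B: vector_space scale by (rule vs)

sublocale V: vector_space "fscale scale" by (rule vsF[OF vs])

lemma F_sub: "x \<in> P \<Longrightarrow> B.subspace (F x)"
  using sheaf by (simp add: is_sheaf_def)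

lemma F0: "x \<in> P \<Longrightarrow> 0 \<in> F x" using F_sub B.subspace_0 by blast
lemma Fadd: "x \<in> P \<Longrightarrow> u \<in> F x \<Longrightarrow> v \<in> F x \<Longrightarrow> u + v \<in> F x"
  using F_sub B.subspace_add by blast
lemma Fneg: "x \<in> P \<Longrightarrow> u \<in> F x \<Longrightarrow> - u \<in> F x"
  using F_sub B.subspace_neg by blast
lemma Fscale: "x \<in> P \<Longrightarrow> u \<in> F x \<Longrightarrow> scale a u \<in> F x"
  using F_sub B.subspace_scale by blast
lemma Fsum: "x \<in> P \<Longrightarrow> (\<And>a. a \<in> A \<Longrightarrow> f a \<in> F x) \<Longrightarrow> sum f A \<in> F x"
  using F_sub B.subspace_sum by blast
lemma Fsg: "x \<in> P \<Longrightarrow> u \<in> F x \<Longrightarrow> sg i u \<in> F x"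
  by (simp add: sg_def Fneg)

lemma R_in: "x \<in> P \<Longrightarrow> y \<in> P \<Longrightarrow> x \<le> y \<Longrightarrow> v \<in> F y \<Longrightarrow> R y x v \<in> F x"
  using sheaf by (simp add: is_sheaf_def)
lemma R_add: "x \<in> P \<Longrightarrow> y \<in> P \<Longrightarrow> x \<le> y \<Longrightarrow> v \<in> F y \<Longrightarrow> w \<in> F y \<Longrightarrow>
    R y x (v + w) = R y x v + R y x w"
  using sheaf by (simp add: is_sheaf_def)
lemma R_scale: "x \<in> P \<Longrightarrow> y \<in> P \<Longrightarrow> x \<le> y \<Longrightarrow> v \<in> F y \<Longrightarrow>
    R y x (scale a v) = scale a (R y x v)"
  using sheaf by (simp add: is_sheaf_def)
lemma R_id: "x \<in> P \<Longrightarrow> v \<in> F x \<Longrightarrow> R x x v = v"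
  using sheaf by (simp add: is_sheaf_def)
lemma R_comp: "x \<in> P \<Longrightarrow> y \<in> P \<Longrightarrow> z \<in> P \<Longrightarrow> x \<le> y \<Longrightarrow> y \<le> z \<Longrightarrow> v \<in> F z \<Longrightarrow>
    R y x (R z y v) = R z x v"
  using sheaf unfolding is_sheaf_def by blast
lemma R_0: "x \<in> P \<Longrightarrow> y \<in> P \<Longrightarrow> x \<le> y \<Longrightarrow> R y x 0 = 0"
  using R_add[of x y 0 0] F0[of y] by simp
lemma R_neg: "x \<in> P \<Longrightarrow> y \<in> P \<Longrightarrow> x \<le> y \<Longrightarrow> v \<in> F y \<Longrightarrow> R y x (- v) = - R y x v"
proof -
  assume a: "x \<in> P" "y \<in> P" "x \<le> y" "v \<in> F y"
  have "R y x v + R y x (- v) = 0" using R_add[OF a, of "- v"] R_0[OF a(1-3)] Fneg[OF a(2,4)] by simp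
  then show ?thesis by (metis minus_unique)
qed
lemma R_sg: "x \<in> P \<Longrightarrow> y \<in> P \<Longrightarrow> x \<le> y \<Longrightarrow> v \<in> F y \<Longrightarrow> R y x (sg i v) = sg i (R y x v)"
  by (simp add: sg_def R_neg)

lemma scale_sign: "scale ((-1) ^ i) u = sg i u"
  by (cases "even i") (simp_all add: sg_def)

definition th :: "'a list \<Rightarrow> nat \<Rightarrow> 'v \<Rightarrow> 'v" where
  "th s i u = (if i = 0 then R (s ! 0) (s ! 1) u else sg i u)"

lemma bdry_pt: "bdry scale P R n c t = (if n = 0 then 0 else
   (\<Sum>s\<in>chains P n. \<Sum>i\<in>{0..n}. if face i s = t then th s i (c s) else 0))"
  unfolding bdry_def th_def scale_sign by (rule refl)

lemma bdry_0[simp]: "bdry scale P R 0 c = 0"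
  by (simp add: bdry_def fun_eq_iff)

abbreviation C where "C n \<equiv> chain_space P F n"

lemma cs_out: "c \<in> C n \<Longrightarrow> s \<notin> chains P n \<Longrightarrow> c s = 0"
  by (simp add: chain_space_def)
lemma cs_in: "c \<in> C n \<Longrightarrow> s \<in> chains P n \<Longrightarrow> c s \<in> F (hd s)"
  by (simp add: chain_space_def)
lemma chain_hd: "s \<in> chains P n \<Longrightarrow> hd s \<in> P \<and> s \<noteq> [] \<and> hd s = s ! 0"
  by (cases s) (auto simp: chains_def)
lemma chain_hdP: "s \<in> chains P n \<Longrightarrow> hd s \<in> P"
  using chain_hd by blast
lemma chain_nthP: "s \<in> chains P n \<Longrightarrow> i \<le> n \<Longrightarrow> s ! i \<in> P"
  by (simp add: chains_nth)

lemma csI: "(\<And>s. s \<in> chains P n \<Longrightarrow> c s \<in> F (hd s)) \<Longrightarrow> (\<And>s. s \<notin> chains P n \<Longrightarrow> c s = 0)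
   \<Longrightarrow> c \<in> C n"
  by (simp add: chain_space_def)

lemma C_sub: "V.subspace (C n)"
  unfolding V.subspace_def
proof (intro conjI ballI allI)
  show "0 \<in> C n" by (rule csI) (simp_all add: F0 chain_hd[THEN conjunct1])
  fix x y assume "x \<in> C n" "y \<in> C n"
  then show "x + y \<in> C n" by (intro csI) (auto simp: cs_in cs_out Fadd chain_hd[THEN conjunct1])
next
  fix a x assume "x \<in> C n"
  then show "fscale scale a x \<in> C n"
    by (intro csI) (auto simp: fscale_def cs_in cs_out Fscale chain_hd[THEN conjunct1])
qed

lemma th_facts:
  assumes s: "s \<in> chains P (Suc n)"
  shows "s ! 1 \<in> P" "s ! 0 \<in> P" "s ! 1 \<le> s ! 0" "hd s = s ! 0"
  using s chain_hd[OF s] by (auto simp: chains_nth)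

lemma th_in:
  assumes s: "s \<in> chains P (Suc n)" and i: "i \<le> Suc n" and u: "u \<in> F (hd s)"
  shows "th s i u \<in> F (hd (face i s))"
proof (cases "i = 0")
  case True
  have L: "length s = Suc (Suc n)" using s by (simp add: chains_nth)
  have "s ! 1 \<in> P" "s ! 0 \<in> P" "s ! 1 \<le> s ! 0" using s by (auto simp: chains_nth)
  moreover have "hd s = s ! 0" using chain_hd[OF s] by simp
  ultimately show ?thesis using True u L R_in[of "s ! 1" "s ! 0" u] by (simp add: th_def hd_face0)
next
  case False
  have L: "length s = Suc (Suc n)" using s by (simp add: chains_nth)
  then show ?thesis using False u th_facts[OF s] i by (simp add: th_def hd_face Fsg)
qed

lemma th_add:
  assumes s: "s \<in> chains P (Suc n)" and u: "u \<in> F (hd s)" and v: "v \<in> F (hd s)"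
  shows "th s i (u + v) = th s i u + th s i v"
  using th_facts[OF s] u v by (simp add: th_def R_add sg_add)

lemma th_0[simp]:
  assumes s: "s \<in> chains P (Suc n)"
  shows "th s i 0 = 0"
  using th_facts[OF s] by (simp add: th_def R_0)

lemma th_scale:
  assumes s: "s \<in> chains P (Suc n)" and u: "u \<in> F (hd s)"
  shows "th s i (scale a u) = scale a (th s i u)"
  using th_facts[OF s] u by (simp add: th_def R_scale sg_def)

lemma th_sum:
  assumes s: "s \<in> chains P (Suc n)" and f: "\<And>a. a \<in> A \<Longrightarrow> f a \<in> F (hd s)"
  shows "th s i (sum f A) = (\<Sum>a\<in>A. th s i (f a))"
  using f
proof (induction A rule: infinite_finite_induct)
  case (insert x A)
  have "sum f A \<in> F (hd s)" using insert.prems Fsum[of "hd s" A f] th_facts[OF s] by auto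
  then show ?case using insert th_add[OF s] by simp
qed (auto simp: th_0[OF s])

lemma th_if: "s \<in> chains P (Suc n) \<Longrightarrow> th s i (if b then u else 0) = (if b then th s i u else 0)"
  by simp

end


lemma sum4_swap: "(\<Sum>a\<in>A. \<Sum>b\<in>B. \<Sum>c\<in>C. \<Sum>d\<in>D. f a b c d) = (\<Sum>c\<in>C. \<Sum>d\<in>D. \<Sum>a\<in>A. \<Sum>b\<in>B. (f a b c d :: 'x::comm_monoid_add))"
proof -
  have "(\<Sum>a\<in>A. \<Sum>b\<in>B. \<Sum>c\<in>C. \<Sum>d\<in>D. f a b c d) = (\<Sum>a\<in>A. \<Sum>c\<in>C. \<Sum>b\<in>B. \<Sum>d\<in>D. f a b c d)"
    by (rule sum.cong[OF refl], rule sum.swap)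
  also have "\<dots> = (\<Sum>c\<in>C. \<Sum>a\<in>A. \<Sum>b\<in>B. \<Sum>d\<in>D. f a b c d)" by (rule sum.swap)
  also have "\<dots> = (\<Sum>c\<in>C. \<Sum>a\<in>A. \<Sum>d\<in>D. \<Sum>b\<in>B. f a b c d)"
    by (rule sum.cong[OF refl], rule sum.cong[OF refl], rule sum.swap)
  also have "\<dots> = (\<Sum>c\<in>C. \<Sum>d\<in>D. \<Sum>a\<in>A. \<Sum>b\<in>B. f a b c d)"
    by (rule sum.cong[OF refl], rule sum.swap)
  finally show ?thesis .
qed

lemma if_add0: "(if b then x + y else 0) = (if b then x else 0) + (if b then y else (0::'x::monoid_add))"
  by simp

context shf begin

lemma bdry_C:
  assumes c: "c \<in> C (Suc n)"
  shows "bdry scale P R (Suc n) c \<in> C n"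
proof (rule csI)
  fix t assume t: "t \<in> chains P n"
  have hP: "hd t \<in> P" using chain_hdP[OF t] .
  have mem: "(if face i s = t then th s i (c s) else 0) \<in> F (hd t)"
    if s: "s \<in> chains P (Suc n)" and i: "i \<in> {0..Suc n}" for s i
    using th_in[OF s _ cs_in[OF c s], of i] i F0[OF hP] by auto
  show "bdry scale P R (Suc n) c t \<in> F (hd t)"
    unfolding bdry_pt by (auto intro!: Fsum[OF hP] mem)
next
  fix t assume t: "t \<notin> chains P n"
  have "\<And>s i. s \<in> chains P (Suc n) \<Longrightarrow> i \<in> {0..Suc n} \<Longrightarrow> face i s \<noteq> t"
    using face_chain t by fastforce
  then show "bdry scale P R (Suc n) c t = 0" unfolding bdry_pt by simp
qed

lemma bdry_add:
  assumes c: "c \<in> C n" and d: "d \<in> C n"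
  shows "bdry scale P R n (c + d) = bdry scale P R n c + bdry scale P R n d"
proof (cases n)
  case (Suc m)
  show ?thesis
  proof (rule ext)
    fix t
    have "\<And>s i. s \<in> chains P n \<Longrightarrow> (if face i s = t then th s i ((c + d) s) else 0) =
       (if face i s = t then th s i (c s) else 0) + (if face i s = t then th s i (d s) else 0)"
      using th_add cs_in[OF c] cs_in[OF d] Suc by auto
    then show "bdry scale P R n (c + d) t = (bdry scale P R n c + bdry scale P R n d) t"
      unfolding bdry_pt plus_fun_apply using Suc by (simp add: sum.distrib)
  qed
qed simp

lemma bdry_scale:
  assumes c: "c \<in> C n"
  shows "bdry scale P R n (fscale scale a c) = fscale scale a (bdry scale P R n c)"
proof (cases n)
  case (Suc m)
  show ?thesis
  proof (rule ext)
    fix t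
    have eq: "\<And>s i. s \<in> chains P n \<Longrightarrow> (if face i s = t then th s i (fscale scale a c s) else 0) =
       scale a (if face i s = t then th s i (c s) else 0)"
      using th_scale cs_in[OF c] Suc by (auto simp: fscale_def)
    then have "bdry scale P R n (fscale scale a c) t = (\<Sum>s\<in>chains P n. \<Sum>i\<in>{0..n}.
        scale a (if face i s = t then th s i (c s) else 0))"
      unfolding bdry_pt using Suc eq by simp
    also have "\<dots> = fscale scale a (bdry scale P R n c) t"
      unfolding bdry_pt fscale_def using Suc by (simp add: B.scale_sum_right)
    finally show "bdry scale P R n (fscale scale a c) t = fscale scale a (bdry scale P R n c) t" .
  qed
qed (simp add: fscale_def fun_eq_iff)

lemma th_th:
  assumes s: "s \<in> chains P (Suc (Suc m))" and u: "u \<in> F (hd s)" and ji: "j < i"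
    and i: "i \<le> Suc (Suc m)"
  shows "th (face j s) (i - 1) (th s j u) = - th (face i s) j (th s i u)"
proof -
  have L: "length s = Suc (Suc (Suc m))" using s by (simp add: chains_nth)
  have P: "s ! 0 \<in> P" "s ! 1 \<in> P" "s ! 2 \<in> P" using s by (auto simp: chains_nth)
  have O: "s ! 1 \<le> s ! 0" "s ! 2 \<le> s ! 1" using s by (auto simp: chains_nth)
  have u0: "u \<in> F (s ! 0)" using u chain_hd[OF s] by simp
  have u1: "R (s ! 0) (s ! 1) u \<in> F (s ! 1)" using R_in[OF P(2) P(1) O(1) u0] .
  consider "j = 0" "i = 1" | "j = 0" "2 \<le> i" | "1 \<le> j" using ji by linarith
  then show ?thesis
  proof cases
    case 1
    have f0: "face 0 s ! 0 = s ! 1" "face 0 s ! 1 = s ! 2" using L by (simp_all add: face_0 nth_tl numeral_2_eq_2)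
    have f1: "face 1 s ! 0 = s ! 0" "face 1 s ! 1 = s ! 2" using L by (simp_all add: face_nth numeral_2_eq_2)
    have "th (face j s) (i - 1) (th s j u) = R (s ! 1) (s ! 2) (R (s ! 0) (s ! 1) u)"
      using 1 f0 by (simp add: th_def)
    also have "\<dots> = R (s ! 0) (s ! 2) u" using R_comp[OF P(3) P(2) P(1) O(2) O(1) u0] .
    also have "\<dots> = - th (face i s) j (th s i u)"
      using 1 f1 R_neg[OF P(3) P(1) order.trans[OF O(2) O(1)] u0] by (simp add: th_def sg_def)
    finally show ?thesis .
  next
    case 2
    have fi: "face i s ! 0 = s ! 0" "face i s ! 1 = s ! 1" using L 2 i by (simp_all add: face_nth)
    have "th (face j s) (i - 1) (th s j u) = sg (i - 1) (R (s ! 0) (s ! 1) u)"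
      using 2 by (simp add: th_def)
    also have "\<dots> = - sg i (R (s ! 0) (s ! 1) u)"
    proof -
      have "Suc (i - 1) = i" using 2 by simp
      then have "sg i (R (s ! 0) (s ! 1) u) = - sg (i - 1) (R (s ! 0) (s ! 1) u)"
        using sg_Suc[of "i - 1" "R (s ! 0) (s ! 1) u"] by simp
      then show ?thesis by simp
    qed
    also have "\<dots> = - th (face i s) j (th s i u)"
      using 2 fi R_sg[OF P(2) P(1) O(1) u0] by (simp add: th_def)
    finally show ?thesis .
  next
    case 3
    then show ?thesis using ji by (simp add: th_def sg_def)
  qed
qed

lemma simp_cancel:
  assumes s: "s \<in> chains P (Suc (Suc m))" and u: "u \<in> F (hd s)"
  shows "(\<Sum>i\<in>{0..Suc (Suc m)}. \<Sum>j\<in>{0..Suc m}.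
           if face j (face i s) = t then th (face i s) j (th s i u) else 0) = 0"
proof -
  define T where "T = (\<lambda>p. if face (snd p) (face (fst p) s) = t
      then th (face (fst p) s) (snd p) (th s (fst p) u) else 0)"
  define A where "A = {p \<in> {0..Suc (Suc m)} \<times> {0..Suc m}. snd p < fst p}"
  define B where "B = {p \<in> {0..Suc (Suc m)} \<times> {0..Suc m}. fst p \<le> snd p}"
  have L: "length s = Suc (Suc (Suc m))" using s by (simp add: chains_nth)
  have "(\<Sum>i\<in>{0..Suc (Suc m)}. \<Sum>j\<in>{0..Suc m}.
           if face j (face i s) = t then th (face i s) j (th s i u) else 0)
        = (\<Sum>p\<in>{0..Suc (Suc m)} \<times> {0..Suc m}. T p)"
    unfolding sum.cartesian_product by (rule sum.cong) (auto simp: T_def)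
  also have "{0..Suc (Suc m)} \<times> {0..Suc m} = A \<union> B" by (auto simp: A_def B_def)
  also have "sum T (A \<union> B) = sum T A + sum T B"
    by (rule sum.union_disjoint) (auto simp: A_def B_def)
  also have "sum T B = (\<Sum>p\<in>A. T (snd p, fst p - 1))"
    by (rule sym, rule sum.reindex_bij_witness[where i="\<lambda>p. (snd p + 1, fst p)"
          and j="\<lambda>p. (snd p, fst p - 1)"]) (auto simp: A_def B_def)
  also have "sum T A + (\<Sum>p\<in>A. T (snd p, fst p - 1)) = (\<Sum>p\<in>A. T p + T (snd p, fst p - 1))"
    by (simp add: sum.distrib)
  also have "\<dots> = 0"
  proof (rule sum.neutral, rule ballI)
    fix p assume p: "p \<in> A"
    obtain i j where pij: "p = (i, j)" by (cases p)
    have ji: "j < i" "i \<le> Suc (Suc m)" using p pij by (auto simp: A_def)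
    have ff: "face j (face i s) = face (i - 1) (face j s)" using face_face[of j i s] ji L by simp
    show "T p + T (snd p, fst p - 1) = 0"
      using th_th[OF s u ji] ff pij by (simp add: T_def)
  qed
  finally show ?thesis .
qed

lemma bdry_bdry:
  assumes c: "c \<in> C (Suc n)"
  shows "bdry scale P R n (bdry scale P R (Suc n) c) = 0"
proof (cases n)
  case (Suc m)
  let ?d = "bdry scale P R (Suc (Suc m)) c"
  show ?thesis
  proof (rule ext)
    fix t
    let ?X = "\<lambda>r j s i. if face j r = t \<and> face i s = r then th r j (th s i (c s)) else 0"
    have step1: "\<And>r j. r \<in> chains P (Suc m) \<Longrightarrow> (if face j r = t then th r j (?d r) else 0)
       = (\<Sum>s\<in>chains P (Suc (Suc m)). \<Sum>i\<in>{0..Suc (Suc m)}. ?X r j s i)"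
    proof -
      fix r j assume r: "r \<in> chains P (Suc m)"
      have mem: "\<And>s i. s \<in> chains P (Suc (Suc m)) \<Longrightarrow> i \<in> {0..Suc (Suc m)} \<Longrightarrow>
          (if face i s = r then th s i (c s) else 0) \<in> F (hd r)"
      proof -
        fix s i assume s: "s \<in> chains P (Suc (Suc m))" and i: "i \<in> {0..Suc (Suc m)}"
        show "(if face i s = r then th s i (c s) else 0) \<in> F (hd r)"
          using th_in[OF s _ cs_in[OF c[unfolded Suc] s], of i] i F0[OF chain_hdP[OF r]] by auto
      qed
      have mem2: "\<And>s. s \<in> chains P (Suc (Suc m)) \<Longrightarrow> (\<Sum>i\<in>{0..Suc (Suc m)}. 
          if face i s = r then th s i (c s) else 0) \<in> F (hd r)"
        using mem by (intro Fsum[OF chain_hdP[OF r]]) auto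
      have "th r j (?d r) = (\<Sum>s\<in>chains P (Suc (Suc m)). th r j (\<Sum>i\<in>{0..Suc (Suc m)}.
            (if face i s = r then th s i (c s) else 0)))"
        unfolding bdry_pt using mem2 by (simp add: th_sum[OF r])
      also have "\<dots> = (\<Sum>s\<in>chains P (Suc (Suc m)). \<Sum>i\<in>{0..Suc (Suc m)}.
            th r j (if face i s = r then th s i (c s) else 0))"
        using mem by (intro sum.cong refl th_sum[OF r]) auto
      finally have "th r j (?d r) = (\<Sum>s\<in>chains P (Suc (Suc m)). \<Sum>i\<in>{0..Suc (Suc m)}.
            th r j (if face i s = r then th s i (c s) else 0))" .
      then show "(if face j r = t then th r j (?d r) else 0)
       = (\<Sum>s\<in>chains P (Suc (Suc m)). \<Sum>i\<in>{0..Suc (Suc m)}. ?X r j s i)"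
        using th_0[OF r] by (auto intro!: sum.cong)
    qed
    have "bdry scale P R n ?d t = (\<Sum>r\<in>chains P (Suc m). \<Sum>j\<in>{0..Suc m}.
         \<Sum>s\<in>chains P (Suc (Suc m)). \<Sum>i\<in>{0..Suc (Suc m)}. ?X r j s i)"
      unfolding bdry_pt[of n] using Suc step1 by simp
    also have "\<dots> = (\<Sum>s\<in>chains P (Suc (Suc m)). \<Sum>i\<in>{0..Suc (Suc m)}.
         \<Sum>r\<in>chains P (Suc m). \<Sum>j\<in>{0..Suc m}. ?X r j s i)"
      by (rule sum4_swap)
    also have "\<dots> = (\<Sum>s\<in>chains P (Suc (Suc m)). \<Sum>i\<in>{0..Suc (Suc m)}. \<Sum>j\<in>{0..Suc m}.
         if face j (face i s) = t then th (face i s) j (th s i (c s)) else 0)"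
    proof (intro sum.cong refl)
      fix s i assume s: "s \<in> chains P (Suc (Suc m))" and i: "i \<in> {0..Suc (Suc m)}"
      have fc: "face i s \<in> chains P (Suc m)" using face_chain[OF s] i by simp
      have "(\<Sum>r\<in>chains P (Suc m). \<Sum>j\<in>{0..Suc m}. ?X r j s i) = 
            (\<Sum>j\<in>{0..Suc m}. \<Sum>r\<in>chains P (Suc m). ?X r j s i)" by (rule sum.swap)
      also have "\<dots> = (\<Sum>j\<in>{0..Suc m}.
         if face j (face i s) = t then th (face i s) j (th s i (c s)) else 0)"
      proof (rule sum.cong[OF refl])
        fix j
        have "(\<Sum>r\<in>chains P (Suc m). ?X r j s i) = (\<Sum>r\<in>chains P (Suc m).
             if face i s = r then (if face j r = t then th r j (th s i (c s)) else 0) else 0)"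
          by (rule sum.cong) auto
        also have "\<dots> = (if face j (face i s) = t then th (face i s) j (th s i (c s)) else 0)"
          using fc by (simp add: sum.delta chains_finite)
        finally show "(\<Sum>r\<in>chains P (Suc m). ?X r j s i) =
          (if face j (face i s) = t then th (face i s) j (th s i (c s)) else 0)" .
      qed
      finally show "(\<Sum>r\<in>chains P (Suc m). \<Sum>j\<in>{0..Suc m}. ?X r j s i) = (\<Sum>j\<in>{0..Suc m}.
         if face j (face i s) = t then th (face i s) j (th s i (c s)) else 0)" .
    qed
    also have "\<dots> = 0"
      using simp_cancel cs_in[OF c[unfolded Suc]] by (simp add: sum.neutral)
    finally have "bdry scale P R n ?d t = 0" .
    then show "bdry scale P R n (bdry scale P R (Suc n) c) t = 0 t" using Suc by simp
  qed
qed simp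

end


context vector_space begin

lemma fin_basis:
  assumes "U \<subseteq> span A0" "finite A0"
  obtains B where "B \<subseteq> U" "independent B" "U \<subseteq> span B" "card B = dim U" "finite B"
proof -
  obtain B where B: "B \<subseteq> U" "independent B" "U \<subseteq> span B" "card B = dim U"
    using basis_exists by blast
  have "finite B" using independent_span_bound[OF assms(2) B(2)] B(1) assms(1) by auto
  then show ?thesis using B that by blast
qed

lemma indep_zero_coeffs:
  assumes "independent B" "S \<subseteq> B" "finite S" "(\<Sum>v\<in>S. u v *s v) = 0" "v \<in> S"
  shows "u v = 0"
  using assms unfolding independent_explicit_finite_subsets by blast

lemma dim_direct_sum:
  assumes U: "subspace U" and W: "subspace W" and UW: "U \<inter> W \<subseteq> {0}"
    and fU: "U \<subseteq> span A0" "finite A0" and fW: "W \<subseteq> span A1" "finite A1"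
  shows "dim {u + w | u w. u \<in> U \<and> w \<in> W} = dim U + dim W"
proof -
  obtain BU where BU: "BU \<subseteq> U" "independent BU" "U \<subseteq> span BU" "card BU = dim U" "finite BU"
    using fin_basis[OF fU] by blast
  obtain BW where BW: "BW \<subseteq> W" "independent BW" "W \<subseteq> span BW" "card BW = dim W" "finite BW"
    using fin_basis[OF fW] by blast
  have disj: "BU \<inter> BW = {}"
  proof (rule ccontr)
    assume "BU \<inter> BW \<noteq> {}"
    then obtain x where x: "x \<in> BU" "x \<in> BW" by blast
    then have "x = 0" using UW BU(1) BW(1) by blast
    then show False using x BU(2) dependent_zero by blast
  qed
  have ind: "independent (BU \<union> BW)"
    unfolding independent_explicit_finite_subsets
  proof (intro allI impI ballI)
    fix S u v assume S: "S \<subseteq> BU \<union> BW" "finite S" and z: "(\<Sum>v\<in>S. u v *s v) = 0" and v: "v \<in> S"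
    let ?S1 = "S \<inter> BU" and ?S2 = "S \<inter> BW"
    have SS: "S = ?S1 \<union> ?S2" "?S1 \<inter> ?S2 = {}" using S disj by auto
    have "(\<Sum>v\<in>S. u v *s v) = (\<Sum>v\<in>?S1. u v *s v) + (\<Sum>v\<in>?S2. u v *s v)"
      using S(2) SS by (metis finite_Un sum.union_disjoint)
    then have e: "(\<Sum>v\<in>?S1. u v *s v) = - (\<Sum>v\<in>?S2. u v *s v)" using z
      by (simp add: eq_neg_iff_add_eq_0)
    have x1U: "(\<Sum>v\<in>?S1. u v *s v) \<in> U"
      using BU(1) by (intro subspace_sum[OF U] subspace_scale[OF U]) auto
    have x2W: "(\<Sum>v\<in>?S2. u v *s v) \<in> W"
      using BW(1) by (intro subspace_sum[OF W] subspace_scale[OF W]) auto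
    have "(\<Sum>v\<in>?S1. u v *s v) \<in> W" unfolding e using subspace_neg[OF W x2W] .
    then have z1: "(\<Sum>v\<in>?S1. u v *s v) = 0" using x1U UW by blast
    then have z2: "(\<Sum>v\<in>?S2. u v *s v) = 0" using e by simp
    show "u v = 0"
    proof (cases "v \<in> BU")
      case True
      then show ?thesis using indep_zero_coeffs[OF BU(2) _ _ z1, of v] S(2) v by auto
    next
      case False
      then show ?thesis using indep_zero_coeffs[OF BW(2) _ _ z2, of v] S v by auto
    qed
  qed
  have sp: "{u + w | u w. u \<in> U \<and> w \<in> W} \<subseteq> span (BU \<union> BW)"
  proof
    fix x assume "x \<in> {u + w | u w. u \<in> U \<and> w \<in> W}"
    then obtain u w where x: "x = u + w" "u \<in> U" "w \<in> W" by blast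
    have "u \<in> span (BU \<union> BW)" using x(2) BU(3) span_mono[of BU "BU \<union> BW"] by blast
    moreover have "w \<in> span (BU \<union> BW)" using x(3) BW(3) span_mono[of BW "BU \<union> BW"] by blast
    ultimately show "x \<in> span (BU \<union> BW)" using x(1) span_add by blast
  qed
  have sub: "BU \<union> BW \<subseteq> {u + w | u w. u \<in> U \<and> w \<in> W}"
  proof
    fix x assume "x \<in> BU \<union> BW"
    then show "x \<in> {u + w | u w. u \<in> U \<and> w \<in> W}"
    proof
      assume "x \<in> BU" then show ?thesis using BU(1) subspace_0[OF W] by (intro CollectI exI[of _ x] exI[of _ 0]) auto
    next
      assume "x \<in> BW" then show ?thesis using BW(1) subspace_0[OF U] by (intro CollectI exI[of _ 0] exI[of _ x]) auto
    qed
  qed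
  have "card (BU \<union> BW) = dim U + dim W" using card_Un_disjoint[OF BU(5) BW(5) disj] BU(4) BW(4) by simp
  then show ?thesis using dim_unique[OF sub sp ind] by simp
qed

lemma rank_nullity:
  assumes U: "subspace U" and fU: "U \<subseteq> span A0" "finite A0"
    and add: "\<And>x y. x \<in> U \<Longrightarrow> y \<in> U \<Longrightarrow> f (x + y) = f x + f y"
    and sc: "\<And>x a. x \<in> U \<Longrightarrow> f (a *s x) = a *s f x"
  shows "dim U = dim {x \<in> U. f x = 0} + dim (f ` U)"
proof -
  let ?K = "{x \<in> U. f x = 0}"
  have f0: "f 0 = 0" using add[of 0 0] subspace_0[OF U] by simp
  have fsum: "\<And>S g. finite S \<Longrightarrow> (\<And>s. s \<in> S \<Longrightarrow> g s \<in> U) \<Longrightarrow> f (sum g S) = (\<Sum>s\<in>S. f (g s))"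
  proof -
    fix S g assume "finite S" "\<And>s. s \<in> S \<Longrightarrow> g s \<in> U"
    then show "f (sum g S) = (\<Sum>s\<in>S. f (g s))"
    proof (induction S rule: finite_induct)
      case (insert x S)
      have "sum g S \<in> U" using insert.prems by (intro subspace_sum[OF U]) auto
      then show ?case using insert add[of "g x" "sum g S"] by simp
    qed (simp add: f0)
  qed
  have KU: "?K \<subseteq> U" by blast
  have fK: "?K \<subseteq> span A0" using KU fU by blast
  obtain A where A: "A \<subseteq> ?K" "independent A" "?K \<subseteq> span A" "card A = dim ?K" "finite A"
    using fin_basis[OF fK fU(2)] by blast
  obtain B where B: "A \<subseteq> B" "B \<subseteq> U" "independent B" "U \<subseteq> span B"
    using maximal_independent_subset_extend[of A U] A(1,2) by blast
  have fB: "finite B" using independent_span_bound[OF fU(2) B(3)] B(2) fU(1) by auto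
  have cB: "card B = dim U" using basis_card_eq_dim[OF B(2,4,3)] .
  define D where "D = B - A"
  have fD: "finite D" using fB by (simp add: D_def)
  have key: "\<And>k. (\<Sum>b\<in>D. k b *s f b) = 0 \<Longrightarrow> \<forall>b\<in>D. k b = 0"
  proof -
    fix k assume k: "(\<Sum>b\<in>D. k b *s f b) = 0"
    let ?y = "\<Sum>b\<in>D. k b *s b"
    have yU: "?y \<in> U" using B(2) by (intro subspace_sum[OF U] subspace_scale[OF U]) (auto simp: D_def)
    have "f ?y = (\<Sum>b\<in>D. f (k b *s b))" using B(2) fD by (intro fsum) (auto simp: D_def intro: subspace_scale[OF U])
    also have "\<dots> = (\<Sum>b\<in>D. k b *s f b)" using B(2) by (intro sum.cong refl sc) (auto simp: D_def)
    finally have "?y \<in> ?K" using yU k by simp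
    then have "?y \<in> span A" using A(3) by blast
    then obtain m where m: "?y = (\<Sum>a\<in>A. m a *s a)" using span_finite[OF A(5)] by auto
    define w where "w = (\<lambda>v. if v \<in> D then k v else - m v)"
    have BAD: "B = D \<union> A" "D \<inter> A = {}" using B(1) by (auto simp: D_def)
    have "(\<Sum>v\<in>B. w v *s v) = (\<Sum>v\<in>D. w v *s v) + (\<Sum>v\<in>A. w v *s v)"
      unfolding BAD(1) by (rule sum.union_disjoint[OF fD A(5) BAD(2)])
    also have "(\<Sum>v\<in>D. w v *s v) = ?y" by (simp add: w_def)
    also have "(\<Sum>v\<in>A. w v *s v) = (\<Sum>v\<in>A. - (m v *s v))"
      using BAD(2) by (intro sum.cong refl) (auto simp: w_def)
    also have "\<dots> = - (\<Sum>a\<in>A. m a *s a)" by (simp add: sum_negf)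
    finally have "(\<Sum>v\<in>B. w v *s v) = 0" using m by simp
    then have "\<forall>v\<in>B. w v = 0" using B(3) fB unfolding independent_explicit_finite_subsets by blast
    then show "\<forall>b\<in>D. k b = 0" by (auto simp: w_def D_def)
  qed
  have inj: "inj_on f D"
  proof (rule inj_onI, rule ccontr)
    fix b1 b2 assume b: "b1 \<in> D" "b2 \<in> D" "f b1 = f b2" "b1 \<noteq> b2"
    define k where "k = (\<lambda>b. (if b = b1 then 1 else 0) - (if b = b2 then 1 else (0::'a)))"
    have "(\<Sum>b\<in>D. k b *s f b) = (\<Sum>b\<in>D. (if b = b1 then f b else 0)) - (\<Sum>b\<in>D. (if b = b2 then f b else 0))"
      by (simp add: k_def scale_left_diff_distrib sum_subtractf if_distrib[of "\<lambda>c. c *s _"] cong: if_cong)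
    also have "\<dots> = 0" using b fD by simp
    finally have "k b1 = 0" using key b(1) by blast
    then show False using b(4) by (simp add: k_def)
  qed
  have indD: "independent (f ` D)"
  proof (rule independent_if_scalars_zero)
    show "finite (f ` D)" using fD by simp
    fix g x assume z: "(\<Sum>x\<in>f ` D. g x *s x) = 0" and x: "x \<in> f ` D"
    have "(\<Sum>b\<in>D. g (f b) *s f b) = 0" using z by (simp add: sum.reindex[OF inj])
    then show "g x = 0" using key[of "\<lambda>b. g (f b)"] x by auto
  qed
  have fDU: "f ` D \<subseteq> f ` U" using B(2) by (auto simp: D_def)
  have Usp: "f ` U \<subseteq> span (f ` D)"
  proof
    fix z assume "z \<in> f ` U"
    then obtain x where x: "x \<in> U" "z = f x" by blast
    then have "x \<in> span B" using B(4) by blast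
    then obtain k where k: "x = (\<Sum>b\<in>B. k b *s b)" using span_finite[OF fB] by auto
    have "f x = (\<Sum>b\<in>B. f (k b *s b))" unfolding k using B(2) fB
      by (intro fsum) (auto intro: subspace_scale[OF U])
    also have "\<dots> = (\<Sum>b\<in>B. k b *s f b)" using B(2) by (intro sum.cong refl sc) auto
    also have "\<dots> = (\<Sum>b\<in>D. k b *s f b) + (\<Sum>b\<in>A. k b *s f b)"
    proof -
      have "B = D \<union> A" "D \<inter> A = {}" using B(1) by (auto simp: D_def)
      then show ?thesis using fD A(5) by (simp add: sum.union_disjoint)
    qed
    also have "(\<Sum>b\<in>A. k b *s f b) = 0" using A(1) by (intro sum.neutral) auto
    finally have "f x = (\<Sum>b\<in>D. k b *s f b)" by simp
    moreover have "(\<Sum>b\<in>D. k b *s f b) \<in> span (f ` D)"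
      by (intro span_sum span_scale span_base) auto
    ultimately show "z \<in> span (f ` D)" using x by simp
  qed
  have "dim (f ` U) = card (f ` D)" using dim_unique[OF fDU Usp indD refl] .
  also have "\<dots> = card D" using card_image[OF inj] .
  also have "\<dots> = card B - card A" using B(1) fB by (simp add: D_def card_Diff_subset[OF A(5)])
  finally show ?thesis using cB A(4) card_mono[OF fB B(1)] by simp
qed

end


context shf begin

definition SP :: "'a list set \<Rightarrow> ('a list \<Rightarrow> 'v) set" where
  "SP X = {c. \<forall>s. (s \<in> X \<longrightarrow> c s \<in> F (hd s)) \<and> (s \<notin> X \<longrightarrow> c s = 0)}"

lemma C_SP: "C n = SP (chains P n)" by (simp add: chain_space_def SP_def)

lemma SP_sub:
  assumes X: "\<And>s. s \<in> X \<Longrightarrow> hd s \<in> P"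
  shows "V.subspace (SP X)"
  unfolding V.subspace_def
proof (intro conjI ballI allI)
  show "0 \<in> SP X" using X by (auto simp: SP_def F0)
  fix x y assume "x \<in> SP X" "y \<in> SP X"
  then show "x + y \<in> SP X" using X by (auto simp: SP_def Fadd)
next
  fix a x assume "x \<in> SP X"
  then show "fscale scale a x \<in> SP X" using X by (auto simp: SP_def fscale_def Fscale)
qed

definition bas :: "'a \<Rightarrow> 'v set" where
  "bas x = (SOME B0. B0 \<subseteq> F x \<and> B.independent B0 \<and> F x \<subseteq> B.span B0 \<and> card B0 = B.dim (F x) \<and> finite B0)"

lemma bas:
  assumes x: "x \<in> P"
  shows "bas x \<subseteq> F x" "B.independent (bas x)" "F x \<subseteq> B.span (bas x)"
    "card (bas x) = B.dim (F x)" "finite (bas x)"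
proof -
  obtain B0 where "finite B0" "B0 \<subseteq> F x" "B.span B0 = F x" using fd x unfolding finite_dim_stalks_def by blast
  then have "F x \<subseteq> B.span B0" by simp
  then obtain B1 where "B1 \<subseteq> F x" "B.independent B1" "F x \<subseteq> B.span B1" "card B1 = B.dim (F x)" "finite B1"
    using B.fin_basis \<open>finite B0\<close> by blast
  then have "\<exists>B0. B0 \<subseteq> F x \<and> B.independent B0 \<and> F x \<subseteq> B.span B0 \<and> card B0 = B.dim (F x) \<and> finite B0"
    by blast
  then have "bas x \<subseteq> F x \<and> B.independent (bas x) \<and> F x \<subseteq> B.span (bas x) \<and> card (bas x) = B.dim (F x) \<and> finite (bas x)"
    unfolding bas_def by (rule someI_ex)
  then show "bas x \<subseteq> F x" "B.independent (bas x)" "F x \<subseteq> B.span (bas x)"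
    "card (bas x) = B.dim (F x)" "finite (bas x)" by auto
qed

definition el :: "'a list \<Rightarrow> 'v \<Rightarrow> ('a list \<Rightarrow> 'v)" where
  "el s v = (\<lambda>t. if t = s then v else 0)"

lemma el_inj: "el s u = el s v \<Longrightarrow> u = v"
  unfolding el_def by (metis)

lemma el_sum: "el s (sum f A) = (\<Sum>a\<in>A. el s (f a))"
  by (rule ext) (simp add: el_def sum_apply_fun)

lemma el_scale: "el s (scale a v) = fscale scale a (el s v)"
  by (rule ext) (simp add: el_def fscale_def)

lemma SP_basis:
  assumes fX: "finite X" and X: "\<And>s. s \<in> X \<Longrightarrow> hd s \<in> P"
  defines "W \<equiv> (\<Union>s\<in>X. el s ` bas (hd s))"
  shows "W \<subseteq> SP X" "SP X \<subseteq> V.span W" "V.independent W" "finite W"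
    "card W = (\<Sum>s\<in>X. B.dim (F (hd s)))"
proof -
  show "W \<subseteq> SP X"
    using bas(1) X F0 by (fastforce simp: W_def SP_def el_def)
  show "finite W" using fX bas(5) X by (simp add: W_def)
  show "SP X \<subseteq> V.span W"
  proof
    fix c assume c: "c \<in> SP X"
    have ce: "c = (\<Sum>s\<in>X. el s (c s))"
      by (rule ext) (use c in \<open>auto simp: sum_apply_fun el_def SP_def fX\<close>)
    have "el s (c s) \<in> V.span W" if s: "s \<in> X" for s
    proof -
      have "c s \<in> B.span (bas (hd s))" using c s bas(3)[OF X[OF s]] by (auto simp: SP_def)
      then obtain k where k: "c s = (\<Sum>b\<in>bas (hd s). scale (k b) b)"
        using B.span_finite[OF bas(5)[OF X[OF s]]] by auto
      have "el s (c s) = (\<Sum>b\<in>bas (hd s). fscale scale (k b) (el s b))"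
        unfolding k el_sum el_scale ..
      also have "\<dots> \<in> V.span W"
        using s by (intro V.span_sum V.span_scale V.span_base) (auto simp: W_def)
      finally show ?thesis .
    qed
    then show "c \<in> V.span W" by (subst ce) (intro V.span_sum)
  qed
  show "V.independent W"
    unfolding V.independent_explicit_finite_subsets
  proof (intro allI impI ballI)
    fix S u w0 assume S: "S \<subseteq> W" "finite S" and z: "(\<Sum>w\<in>S. fscale scale (u w) w) = 0"
      and w0: "w0 \<in> S"
    obtain s0 b0 where sb: "s0 \<in> X" "b0 \<in> bas (hd s0)" "w0 = el s0 b0" using S w0 by (auto simp: W_def)
    let ?S0 = "{b \<in> bas (hd s0). el s0 b \<in> S}"
    have "(\<Sum>w\<in>S. scale (u w) (w s0)) = 0"
      using fun_cong[OF z, of s0] by (simp add: sum_apply_fun fscale_def)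
    moreover have "(\<Sum>w\<in>S. scale (u w) (w s0)) = (\<Sum>w\<in>S \<inter> el s0 ` bas (hd s0). scale (u w) (w s0))"
    proof (rule sum.mono_neutral_right[OF S(2)])
      show "S \<inter> el s0 ` bas (hd s0) \<subseteq> S" by blast
      show "\<forall>w\<in>S - S \<inter> el s0 ` bas (hd s0). scale (u w) (w s0) = 0"
      proof
        fix w assume w: "w \<in> S - S \<inter> el s0 ` bas (hd s0)"
        then obtain s b where "s \<in> X" "b \<in> bas (hd s)" "w = el s b" using S by (auto simp: W_def)
        then have "s \<noteq> s0" using w by auto
        then show "scale (u w) (w s0) = 0" using \<open>w = el s b\<close> by (simp add: el_def)
      qed
    qed
    moreover have "S \<inter> el s0 ` bas (hd s0) = el s0 ` ?S0" by auto
    moreover have inj: "inj_on (el s0) ?S0" by (auto intro: inj_onI el_inj)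
    moreover have "(\<Sum>w\<in>el s0 ` ?S0. scale (u w) (w s0)) = (\<Sum>b\<in>?S0. scale (u (el s0 b)) (el s0 b s0))"
      using sum.reindex[OF inj, of "\<lambda>w. scale (u w) (w s0)"] by simp
    ultimately have "(\<Sum>b\<in>?S0. scale (u (el s0 b)) b) = 0"
      by (simp add: el_def)
    then have "u (el s0 b0) = 0"
      using B.indep_zero_coeffs[OF bas(2)[OF X[OF sb(1)]], of ?S0 "\<lambda>b. u (el s0 b)" b0]
        sb w0 bas(5)[OF X[OF sb(1)]] by auto
    then show "u w0 = 0" using sb by simp
  qed
  have disj: "el s ` bas (hd s) \<inter> el s' ` bas (hd s') = {}" if "s \<in> X" "s' \<in> X" "s \<noteq> s'" for s s'
  proof (rule ccontr)
    assume "el s ` bas (hd s) \<inter> el s' ` bas (hd s') \<noteq> {}"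
    then obtain b b' where b: "b \<in> bas (hd s)" "b' \<in> bas (hd s')" "el s b = el s' b'" by blast
    have "el s b s = el s' b' s" using b(3) by simp
    then have "b = 0" using that by (simp add: el_def)
    then show False using b(1) bas(2)[OF X[OF that(1)]] B.dependent_zero by blast
  qed
  have "card W = (\<Sum>s\<in>X. card (el s ` bas (hd s)))"
    unfolding W_def using fX bas(5) X disj by (intro card_UN_disjoint) auto
  also have "\<dots> = (\<Sum>s\<in>X. B.dim (F (hd s)))"
  proof (rule sum.cong[OF refl])
    fix s assume s: "s \<in> X"
    have "inj_on (el s) (bas (hd s))" by (auto intro: inj_onI el_inj)
    then show "card (el s ` bas (hd s)) = B.dim (F (hd s))" using bas(4)[OF X[OF s]] by (simp add: card_image)
  qed
  finally show "card W = (\<Sum>s\<in>X. B.dim (F (hd s)))" .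
qed

lemma SP_dim:
  assumes "finite X" "\<And>s. s \<in> X \<Longrightarrow> hd s \<in> P"
  shows "V.dim (SP X) = (\<Sum>s\<in>X. B.dim (F (hd s)))"
  using V.dim_unique[OF SP_basis(1-3)[OF assms]] SP_basis(5)[OF assms] by simp

lemma SP_fin:
  assumes "finite X" "\<And>s. s \<in> X \<Longrightarrow> hd s \<in> P"
  shows "\<exists>A. finite A \<and> SP X \<subseteq> V.span A"
  using SP_basis(2,4)[OF assms] by blast

end


lemma distinct_face: "distinct s \<Longrightarrow> distinct (face i s)"
proof -
  assume d: "distinct s"
  have "distinct (take i s @ drop i s)" using d by simp
  then have "distinct (take i s)" "set (take i s) \<inter> set (drop i s) = {}"
    unfolding distinct_append by blast+
  moreover have "set (drop (Suc i) s) \<subseteq> set (drop i s)" by (rule set_drop_subset_set_drop) simp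
  ultimately show ?thesis using d by (auto simp: face_def distinct_drop)
qed

lemma face_adj_eq:
  assumes "Suc j < length s" "s ! j = s ! Suc j"
  shows "face j s = face (Suc j) s"
proof (rule nth_equalityI)
  show "length (face j s) = length (face (Suc j) s)" using assms by simp
  fix k assume "k < length (face j s)"
  then have k: "k < length s - 1" using assms by simp
  then show "face j s ! k = face (Suc j) s ! k" using assms
    by (cases "k < j"; cases "k = j") (auto simp: face_nth)
qed

lemma nondistinct_face:
  assumes L: "Suc j < length s" and e: "s ! j = s ! Suc j" and i: "i < length s"
    and ij: "i \<noteq> j" "i \<noteq> Suc j"
  shows "\<not> distinct (face i s)"
proof -
  have ls: "length (face i s) = length s - 1" using i by simp
  show ?thesis
  proof (cases "i < j")
    case True
    have "face i s ! (j - 1) = s ! j" "face i s ! j = s ! Suc j" using True L i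
      by (auto simp: face_nth)
    moreover have "j - 1 < length (face i s)" "j < length (face i s)" "j - 1 \<noteq> j" using True L ls by auto
    ultimately show ?thesis using e by (metis nth_eq_iff_index_eq)
  next
    case False
    then have "Suc j < i" using ij by simp
    then have "face i s ! j = s ! j" "face i s ! Suc j = s ! Suc j" using L i
      by (auto simp: face_nth)
    moreover have "j < length (face i s)" "Suc j < length (face i s)" using \<open>Suc j < i\<close> i ls by auto
    ultimately show ?thesis using e by (metis nth_eq_iff_index_eq n_not_Suc_n)
  qed
qed

context shf begin

abbreviation Nc where "Nc n \<equiv> {s \<in> chains P n. distinct s}"
abbreviation Dc where "Dc n \<equiv> {s \<in> chains P n. \<not> distinct s}"
abbreviation NS where "NS n \<equiv> SP (Nc n)"
abbreviation DS where "DS n \<equiv> SP (Dc n)"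

lemma NS_C: "NS n \<subseteq> C n"
  unfolding C_SP by (auto simp: SP_def F0 chain_hdP)
lemma DS_C: "DS n \<subseteq> C n"
  unfolding C_SP by (auto simp: SP_def F0 chain_hdP)
lemma NS_sub: "V.subspace (NS n)" by (rule SP_sub) (auto simp: chain_hdP)
lemma DS_sub: "V.subspace (DS n)" by (rule SP_sub) (auto simp: chain_hdP)
lemma ND_int: "c \<in> NS n \<Longrightarrow> c \<in> DS n \<Longrightarrow> c = 0"
  by (rule ext) (auto simp: SP_def)

lemma C_split:
  assumes c: "c \<in> C n"
  shows "(\<lambda>s. if distinct s then c s else 0) \<in> NS n" "(\<lambda>s. if distinct s then 0 else c s) \<in> DS n"
    "c = (\<lambda>s. if distinct s then c s else 0) + (\<lambda>s. if distinct s then 0 else c s)"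
  using c by (auto simp: SP_def C_SP F0)

lemma C_fin: "\<exists>A. finite A \<and> C n \<subseteq> V.span A"
  unfolding C_SP by (rule SP_fin) (auto simp: chains_finite chain_hdP)

lemma bdry_NS:
  assumes c: "c \<in> NS (Suc n)"
  shows "bdry scale P R (Suc n) c \<in> NS n"
proof -
  have cC: "c \<in> C (Suc n)" using c NS_C by blast
  have bC: "bdry scale P R (Suc n) c \<in> C n" by (rule bdry_C[OF cC])
  have z: "bdry scale P R (Suc n) c t = 0" if t: "\<not> distinct t" for t
  proof -
    have "(if face i s = t then th s i (c s) else 0) = 0" if s: "s \<in> chains P (Suc n)" for s i
    proof (cases "distinct s")
      case True
      then have "face i s \<noteq> t" using distinct_face t by blast
      then show ?thesis by simp
    next
      case False
      then have "c s = 0" using c by (auto simp: SP_def)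
      then show ?thesis using th_0[OF s] by simp
    qed
    then show ?thesis unfolding bdry_pt by simp
  qed
  show ?thesis using bC z by (auto simp: C_SP SP_def)
qed

lemma th_adj_cancel:
  assumes s: "s \<in> chains P (Suc n)" and u: "u \<in> F (hd s)" and j: "Suc j < length s"
    and e: "s ! j = s ! Suc j"
  shows "th s j u + th s (Suc j) u = 0"
proof (cases "j = 0")
  case True
  have "s ! 0 \<in> P" "u \<in> F (s ! 0)" using th_facts[OF s] u by auto
  then show ?thesis using True e R_id[of "s ! 0" u] by (simp add: th_def sg_def)
next
  case False
  then show ?thesis by (simp add: th_def sg_def)
qed

lemma deg_cancel:
  assumes s: "s \<in> chains P (Suc n)" and nd: "\<not> distinct s" and t: "distinct t" and u: "u \<in> F (hd s)"
  shows "(\<Sum>i\<in>{0..Suc n}. if face i s = t then th s i u else 0) = 0"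
proof -
  have L: "length s = Suc (Suc n)" using s by (simp add: chains_nth)
  have d: "desc s" using s by (simp add: chains_def)
  obtain j where j: "Suc j < length s" "s ! j = s ! Suc j" using nondistinct_adj[OF d nd] by blast
  have "(\<Sum>i\<in>{0..Suc n}. if face i s = t then th s i u else 0)
      = (\<Sum>i\<in>{j, Suc j}. if face i s = t then th s i u else 0)"
  proof (rule sum.mono_neutral_right)
    show "{j, Suc j} \<subseteq> {0..Suc n}" using j L by auto
    show "\<forall>i\<in>{0..Suc n} - {j, Suc j}. (if face i s = t then th s i u else 0) = 0"
    proof
      fix i assume i: "i \<in> {0..Suc n} - {j, Suc j}"
      then have "\<not> distinct (face i s)" using nondistinct_face[OF j] L by auto
      then show "(if face i s = t then th s i u else 0) = 0" using t by auto
    qed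
  qed simp
  also have "\<dots> = (if face j s = t then th s j u + th s (Suc j) u else 0)"
    using face_adj_eq[OF j] by simp
  also have "\<dots> = 0" using th_adj_cancel[OF s u j] by simp
  finally show ?thesis .
qed

lemma bdry_DS:
  assumes c: "c \<in> DS (Suc n)"
  shows "bdry scale P R (Suc n) c \<in> DS n"
proof -
  have cC: "c \<in> C (Suc n)" using c DS_C by blast
  have bC: "bdry scale P R (Suc n) c \<in> C n" by (rule bdry_C[OF cC])
  have z: "bdry scale P R (Suc n) c t = 0" if t: "distinct t" for t
  proof -
    have "(\<Sum>i\<in>{0..Suc n}. if face i s = t then th s i (c s) else 0) = 0" if s: "s \<in> chains P (Suc n)" for s
    proof (cases "distinct s")
      case True
      then have "c s = 0" using c s by (auto simp: SP_def)
      then have "\<And>i. (if face i s = t then th s i (c s) else 0) = 0" using th_0[OF s] by simp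
      then show ?thesis by simp
    next
      case False
      then show ?thesis using deg_cancel[OF s False t cs_in[OF cC s]] by simp
    qed
    then show ?thesis unfolding bdry_pt by simp
  qed
  show ?thesis using bC z by (auto simp: C_SP SP_def)
qed

lemma bdry_diff:
  assumes "c \<in> C n" "d \<in> C n"
  shows "bdry scale P R n (c - d) = bdry scale P R n c - bdry scale P R n d"
proof -
  have "c - d \<in> C n" using assms C_sub V.subspace_diff by blast
  then have "bdry scale P R n (c - d) + bdry scale P R n d = bdry scale P R n c"
    using bdry_add[of "c - d" n d] assms by simp
  then show ?thesis by (simp add: eq_diff_eq)
qed

lemma bdry_zero[simp]: "bdry scale P R n 0 = 0"
proof -
  have z: "0 \<in> C n" using V.subspace_0[OF C_sub] .
  have "bdry scale P R n (0 + 0) = bdry scale P R n 0 + bdry scale P R n 0" by (rule bdry_add[OF z z])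
  then show ?thesis by simp
qed

lemma bdry_sum:
  assumes "finite A" "\<And>a. a \<in> A \<Longrightarrow> g a \<in> C n"
  shows "bdry scale P R n (sum g A) = (\<Sum>a\<in>A. bdry scale P R n (g a))"
  using assms
proof (induction A rule: finite_induct)
  case (insert x A)
  have sA: "sum g A \<in> C n" using insert.prems by (intro V.subspace_sum[OF C_sub]) auto
  have gx: "g x \<in> C n" using insert.prems by simp
  have IH: "bdry scale P R n (sum g A) = (\<Sum>a\<in>A. bdry scale P R n (g a))"
    using insert.IH insert.prems by simp
  show ?case unfolding sum.insert[OF insert.hyps(1,2)] bdry_add[OF gx sA] IH ..
qed simp

lemma el_C: "s \<in> chains P n \<Longrightarrow> u \<in> F (hd s) \<Longrightarrow> el s u \<in> C n"
  by (rule csI) (auto simp: el_def F0 chain_hdP)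

lemma el_zero[simp]: "el s 0 = 0" by (simp add: el_def fun_eq_iff)

lemma C_el_sum: "c \<in> C n \<Longrightarrow> c = (\<Sum>s\<in>chains P n. el s (c s))"
  by (rule ext) (auto simp: sum_apply_fun el_def cs_out chains_finite)

lemma bdry_el:
  assumes s: "s \<in> chains P (Suc n)"
  shows "bdry scale P R (Suc n) (el s u) = (\<Sum>i\<in>{0..Suc n}. el (face i s) (th s i u))"
proof (rule ext)
  fix t
  have "bdry scale P R (Suc n) (el s u) t = (\<Sum>s'\<in>chains P (Suc n). \<Sum>i\<in>{0..Suc n}.
      if face i s' = t then th s' i (el s u s') else 0)" by (simp add: bdry_pt)
  also have "\<dots> = (\<Sum>s'\<in>chains P (Suc n).
      if s' = s then (\<Sum>i\<in>{0..Suc n}. if face i s' = t then th s' i u else 0) else 0)"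
    by (intro sum.cong refl) (auto simp: el_def th_0 cong: if_cong)
  also have "\<dots> = (\<Sum>i\<in>{0..Suc n}. if face i s = t then th s i u else 0)"
    using s by (simp add: sum.delta chains_finite)
  also have "\<dots> = (\<Sum>i\<in>{0..Suc n}. el (face i s) (th s i u)) t"
    unfolding sum_apply_fun by (intro sum.cong refl) (auto simp: el_def)
  finally show "bdry scale P R (Suc n) (el s u) t = (\<Sum>i\<in>{0..Suc n}. el (face i s) (th s i u)) t" .
qed

section \<open>The homotopy\<close>

definition hc :: "'a list \<Rightarrow> bool" where
  "hc s \<longleftrightarrow> \<not> distinct s \<and> even (count_list s (s ! fr s))"

definition Hm :: "nat \<Rightarrow> ('a list \<Rightarrow> 'v) \<Rightarrow> ('a list \<Rightarrow> 'v)" where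
  "Hm n c = (\<lambda>t. \<Sum>s\<in>chains P n. if hc s \<and> dup (fr s) s = t then sg (fr s) (c s) else 0)"

lemma Hm_add: "Hm n (c + d) = Hm n c + Hm n d"
  by (rule ext) (simp add: Hm_def sg_add sum.distrib[symmetric] if_add0 cong: if_cong)

lemma Hm_zero[simp]: "Hm n 0 = 0"
  by (rule ext) (simp add: Hm_def cong: if_cong)

lemma Hm_sum: "Hm n (sum g A) = (\<Sum>a\<in>A. Hm n (g a))"
proof (induction A rule: infinite_finite_induct)
  case (insert x A)
  show ?case unfolding sum.insert[OF insert.hyps(1,2)] Hm_add insert.IH ..
next
  case (infinite A)
  then show ?case by (simp only: sum.infinite[OF infinite] Hm_zero)
next
  case empty
  show ?case by (simp only: sum.empty Hm_zero)
qed

lemma chain_desc: "s \<in> chains P n \<Longrightarrow> desc s" by (simp add: chains_def)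
lemma chain_len: "s \<in> chains P n \<Longrightarrow> length s = Suc n" by (simp add: chains_def)

lemma hc_props:
  assumes s: "s \<in> chains P n" and h: "hc s"
  shows "fr s < n" "dup (fr s) s \<in> chains P (Suc n)" "hd (dup (fr s) s) = hd s"
    "\<not> distinct (dup (fr s) s)"
proof -
  have nd: "\<not> distinct s" using h by (simp add: hc_def)
  have f: "Suc (fr s) < length s" "s ! fr s = s ! Suc (fr s)" using fr_ex[OF chain_desc[OF s] nd] by auto
  have L: "length s = Suc n" using chain_len[OF s] .
  show fn: "fr s < n" using f(1) L by simp
  show "dup (fr s) s \<in> chains P (Suc n)" using dup_chain[OF s, of "fr s"] fn by simp
  have fl: "fr s < length s" using f(1) by simp
  show "hd (dup (fr s) s) = hd s" using hd_dup[OF fl] .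
  show "\<not> distinct (dup (fr s) s)"
  proof
    assume dd: "distinct (dup (fr s) s)"
    have "card (set (dup (fr s) s)) = length (dup (fr s) s)" using distinct_card[OF dd] .
    then have "card (set s) = Suc (length s)" using set_dup[OF fl] length_dup[OF fl] by simp
    then show False using card_length[of s] by simp
  qed
qed

lemma Hm_DS:
  assumes c: "c \<in> C n"
  shows "Hm n c \<in> DS (Suc n)"
  unfolding SP_def
proof (intro CollectI allI conjI impI)
  fix t assume t: "t \<in> Dc (Suc n)"
  show "Hm n c t \<in> F (hd t)"
    unfolding Hm_def
  proof (rule Fsum[OF chain_hdP[of t "Suc n"]])
    show "t \<in> chains P (Suc n)" using t by simp
    fix s assume s: "s \<in> chains P n"
    show "(if hc s \<and> dup (fr s) s = t then sg (fr s) (c s) else 0) \<in> F (hd t)"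
      using hc_props[OF s] cs_in[OF c s] Fsg[OF chain_hdP[OF s]] F0[OF chain_hdP[of t "Suc n"]] t
      by auto
  qed
next
  fix t assume t: "t \<notin> Dc (Suc n)"
  have "(if hc s \<and> dup (fr s) s = t then sg (fr s) (c s) else 0) = 0" if s: "s \<in> chains P n" for s
    using hc_props[OF s] t by auto
  then show "Hm n c t = 0" unfolding Hm_def by simp
qed

lemma Hm_C: "c \<in> C n \<Longrightarrow> Hm n c \<in> C (Suc n)"
  using Hm_DS DS_C by blast

lemma Hm_el:
  assumes s: "s \<in> chains P n"
  shows "Hm n (el s u) = (if hc s then el (dup (fr s) s) (sg (fr s) u) else 0)"
proof (rule ext)
  fix t
  have "Hm n (el s u) t = (\<Sum>s'\<in>chains P n. if s' = s then
      (if hc s' \<and> dup (fr s') s' = t then sg (fr s') u else 0) else 0)"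
    unfolding Hm_def by (intro sum.cong refl) (auto simp: el_def)
  also have "\<dots> = (if hc s \<and> dup (fr s) s = t then sg (fr s) u else 0)"
    using s by (simp add: sum.delta chains_finite)
  finally show "Hm n (el s u) t = (if hc s then el (dup (fr s) s) (sg (fr s) u) else 0) t"
    by (auto simp: el_def)
qed

end


lemma count_le_len: "count_list xs x \<le> length xs"
  by (induction xs) auto

lemma run_facts:
  assumes d: "desc s" and nd: "\<not> distinct s"
  shows "Suc (fr s) < length s" "s ! fr s = s ! Suc (fr s)" "\<And>k. k < fr s \<Longrightarrow> s ! k \<noteq> s ! Suc k"
    "\<And>k. k < fr s \<Longrightarrow> s ! k \<noteq> s ! fr s"
    "\<And>m. m < length s \<Longrightarrow> s ! m = s ! fr s \<longleftrightarrow> fr s \<le> m \<and> m < fr s + count_list s (s ! fr s)"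
    "2 \<le> count_list s (s ! fr s)" "fr s + count_list s (s ! fr s) \<le> length s"
proof -
  note f = fr_ex[OF d nd] 
  note mn = fr_min[OF d nd]
  show "Suc (fr s) < length s" "s ! fr s = s ! Suc (fr s)" using f by auto
  show "\<And>k. k < fr s \<Longrightarrow> s ! k \<noteq> s ! Suc k" using mn by blast
  have jl: "fr s < length s" using f by simp
  show nb: "\<And>k. k < fr s \<Longrightarrow> s ! k \<noteq> s ! fr s"
  proof
    fix k assume k: "k < fr s" "s ! k = s ! fr s"
    have "fr s = k" using prefix_unique[OF d mn k(1) jl jl] k(2) by simp
    then show False using k(1) by simp
  qed
  show ri: "\<And>m. m < length s \<Longrightarrow> s ! m = s ! fr s \<longleftrightarrow> fr s \<le> m \<and> m < fr s + count_list s (s ! fr s)"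
    using run_interval[OF d jl nb] by blast
  have "Suc (fr s) < fr s + count_list s (s ! fr s)" using ri[of "Suc (fr s)"] f by simp
  then show "2 \<le> count_list s (s ! fr s)" by simp
  have "s ! fr s \<notin> set (take (fr s) s)" using nb jl by (auto simp: in_set_conv_nth)
  then have "count_list (take (fr s) s) (s ! fr s) = 0" by (simp add: count_list_0_iff)
  then have "count_list s (s ! fr s) = count_list (drop (fr s) s) (s ! fr s)"
    using count_split[of s "s ! fr s" "fr s"] by simp
  also have "\<dots> \<le> length s - fr s" using count_le_len[of "drop (fr s) s"] by simp
  finally show "fr s + count_list s (s ! fr s) \<le> length s" using jl by simp
qed

lemma notin_face:
  assumes i: "i < length s" and u: "\<And>m. m < length s \<Longrightarrow> s ! m = s ! i \<Longrightarrow> m = i"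
  shows "s ! i \<notin> set (face i s)"
proof
  assume "s ! i \<in> set (face i s)"
  then obtain k where k: "k < length (face i s)" "face i s ! k = s ! i" by (auto simp: in_set_conv_nth)
  then have k': "k < length s - 1" using i by simp
  show False
  proof (cases "k < i")
    case True
    then have "s ! k = s ! i" using k k' i by (simp add: face_nth)
    moreover have "k < length s" using k' by simp
    ultimately show False using u[of k] True by simp
  next
    case False
    then have "s ! Suc k = s ! i" using k k' i by (simp add: face_nth)
    moreover have "Suc k < length s" using k' by simp
    ultimately show False using u[of "Suc k"] False by simp
  qed
qed

lemma card_lt_face:
  assumes i: "i < length s" and u: "\<And>m. m < length s \<Longrightarrow> s ! m = s ! i \<Longrightarrow> m = i"
  shows "card (set (face i s)) < card (set s)"
proof (rule psubset_card_mono)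
  show "finite (set s)" by simp
  have "s ! i \<in> set s" using i by simp
  then show "set (face i s) \<subset> set s" using notin_face[OF i u] set_face[of i s] by blast
qed

lemma face_run_eq:
  assumes ji: "j \<le> i" and il: "i < length s" and run: "\<And>m. j \<le> m \<Longrightarrow> m \<le> i \<Longrightarrow> s ! m = s ! j"
  shows "face i s = face j s"
proof (rule nth_equalityI)
  show "length (face i s) = length (face j s)" using ji il by simp
  fix k assume "k < length (face i s)"
  then have k: "k < length s - 1" using il by simp
  consider "k < j" | "j \<le> k" "k < i" | "i \<le> k" by linarith
  then show "face i s ! k = face j s ! k"
  proof cases
    case 1 then show ?thesis using k ji il by (simp add: face_nth)
  next
    case 2
    have "s ! k = s ! j" "s ! Suc k = s ! j" using run[of k] run[of "Suc k"] 2 by auto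
    then show ?thesis using 2 k ji il by (simp add: face_nth)
  next
    case 3 then show ?thesis using k ji il by (simp add: face_nth)
  qed
qed

lemma dup_face:
  assumes j: "Suc j < length s" and e: "s ! j = s ! Suc j"
  shows "dup j (face j s) = s"
proof (rule nth_equalityI)
  have jl: "j < length (face j s)" using j by simp
  show "length (dup j (face j s)) = length s" using j jl by simp
  fix k assume "k < length (dup j (face j s))"
  then have k: "k < length s" using jl j by simp
  have dn: "dup j (face j s) ! k = (if k \<le> j then face j s ! k else face j s ! (k - 1))"
    using dup_nth[OF jl, of k] k j by simp
  consider "k < j" | "k = j" | "j < k" by linarith
  then show "dup j (face j s) ! k = s ! k"
  proof cases
    case 1 then show ?thesis using dn k j by (simp add: face_nth)
  next
    case 2 then show ?thesis using dn k j e by (simp add: face_nth)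
  next
    case 3
    then have "\<not> k - 1 < j" "Suc (k - 1) = k" "k - 1 < length s - 1" using k by auto
    then show ?thesis using dn k j 3 by (simp add: face_nth)
  qed
qed

lemma alt_sum: "(\<Sum>i\<in>{j..<j + r}. sg i (u::'v::ab_group_add)) = (if even r then 0 else sg j u)"
proof (induction r)
  case (Suc r)
  have "(\<Sum>i\<in>{j..<j + Suc r}. sg i u) = (\<Sum>i\<in>{j..<j + r}. sg i u) + sg (j + r) u"
    by (simp add: sum.atLeastLessThan_Suc)
  then show ?case using Suc by (simp add: sg_def)
qed simp

lemma split3: "a \<le> b \<Longrightarrow> b \<le> c \<Longrightarrow> sum f {0..<c} = sum f {0..<a} + sum f {a..<b} + sum f {b..<(c::nat)}"
  by (simp add: sum.atLeastLessThan_concat)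

lemma sum_if_const: "(\<Sum>i\<in>A. if b then f i else 0) = (if b then sum f A else 0)"
  by simp


context shf begin

lemma th_run0:
  assumes s: "s \<in> chains P (Suc n)" and u: "u \<in> F (hd s)" and z: "i = 0 \<Longrightarrow> s ! 0 = s ! 1"
  shows "th s i u = sg i u"
proof (cases "i = 0")
  case True
  have "s ! 0 \<in> P" "u \<in> F (s ! 0)" using th_facts[OF s] u by auto
  then show ?thesis using True z R_id by (simp add: th_def sg_def)
qed (simp add: th_def)

lemma Bform:
  assumes s: "s \<in> chains P (Suc n)"
  shows "Hm n (bdry scale P R (Suc n) (el s u)) t = (\<Sum>i\<in>{0..Suc n}.
     if hc (face i s) \<and> dup (fr (face i s)) (face i s) = t then sg (fr (face i s)) (th s i u) else 0)"
proof -
  have "Hm n (bdry scale P R (Suc n) (el s u)) = (\<Sum>i\<in>{0..Suc n}. Hm n (el (face i s) (th s i u)))"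
    unfolding bdry_el[OF s] Hm_sum ..
  also have "\<dots> = (\<Sum>i\<in>{0..Suc n}. if hc (face i s) then el (dup (fr (face i s)) (face i s))
        (sg (fr (face i s)) (th s i u)) else 0)"
    using face_chain[OF s] by (intro sum.cong refl Hm_el) auto
  finally show ?thesis unfolding sum_apply_fun by (auto simp: el_def intro!: sum.cong)
qed

lemma Aform:
  assumes s: "s \<in> chains P (Suc n)"
  shows "bdry scale P R (Suc (Suc n)) (Hm (Suc n) (el s u)) t = (if hc s then (\<Sum>i\<in>{0..Suc (Suc n)}.
     if face i (dup (fr s) s) = t then th (dup (fr s) s) i (sg (fr s) u) else 0) else 0)"
proof (cases "hc s")
  case True
  have d: "dup (fr s) s \<in> chains P (Suc (Suc n))" using hc_props[OF s True] by simp
  have "bdry scale P R (Suc (Suc n)) (Hm (Suc n) (el s u)) =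
      bdry scale P R (Suc (Suc n)) (el (dup (fr s) s) (sg (fr s) u))" using True Hm_el[OF s] by simp
  also have "\<dots> = (\<Sum>i\<in>{0..Suc (Suc n)}. el (face i (dup (fr s) s)) (th (dup (fr s) s) i (sg (fr s) u)))"
    by (rule bdry_el[OF d])
  finally show ?thesis using True unfolding sum_apply_fun by (auto simp: el_def intro!: sum.cong)
next
  case False
  then show ?thesis unfolding Hm_el[OF s] by simp
qed

lemma phi_el:
  assumes s: "s \<in> chains P (Suc n)" and nd: "\<not> distinct s" and u: "u \<in> F (hd s)"
    and ct: "card (set s) \<le> card (set t)"
  shows "bdry scale P R (Suc (Suc n)) (Hm (Suc n) (el s u)) t
       + Hm n (bdry scale P R (Suc n) (el s u)) t = (if t = s then u else 0)"
proof -
  have d: "desc s" using chain_desc[OF s] .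
  have L: "length s = Suc (Suc n)" using chain_len[OF s] .
  define j where "j = fr s"
  define r where "r = count_list s (s ! j)"
  have jL: "Suc j < length s" "s ! j = s ! Suc j" using run_facts(1,2)[OF d nd] by (simp_all add: j_def)
  have nbS: "\<And>k. k < j \<Longrightarrow> s ! k \<noteq> s ! Suc k" using run_facts(3)[OF d nd] by (simp add: j_def)
  have run: "\<And>m. m < length s \<Longrightarrow> s ! m = s ! j \<longleftrightarrow> j \<le> m \<and> m < j + r"
    using run_facts(5)[OF d nd] by (simp add: j_def r_def)
  have r2: "2 \<le> r" using run_facts(6)[OF d nd] by (simp add: j_def r_def)
  have jr: "j + r \<le> length s" using run_facts(7)[OF d nd] by (simp add: j_def r_def)
  have jl: "j < length s" using jL by simp
  have uniq: "\<And>i m. i < j \<Longrightarrow> m < length s \<Longrightarrow> s ! m = s ! i \<Longrightarrow> m = i"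
    using prefix_unique[OF d nbS _ jl] by blast
  define a where "a i = (if face i (dup j s) = t then th (dup j s) i (sg j u) else 0)" for i
  define b where "b i = (if hc (face i s) \<and> dup (fr (face i s)) (face i s) = t
      then sg (fr (face i s)) (th s i u) else 0)" for i
  have A: "bdry scale P R (Suc (Suc n)) (Hm (Suc n) (el s u)) t
     = (if hc s then (\<Sum>i\<in>{0..Suc (Suc n)}. a i) else 0)"
    using Aform[OF s] unfolding a_def j_def by simp
  have B: "Hm n (bdry scale P R (Suc n) (el s u)) t = (\<Sum>i\<in>{0..Suc n}. b i)"
    using Bform[OF s] by (simp add: b_def)
  have hcs: "hc s \<longleftrightarrow> even r" by (simp add: hc_def nd r_def j_def)
  have pre_b: "b i = 0" if i: "i < j" for i
  proof -
    let ?p = "face i s"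
    have il: "i < length s" using i jL by simp
    have cl: "card (set ?p) < card (set s)" using card_lt_face[OF il] uniq[OF i] by blast
    show "b i = 0"
    proof (cases "hc ?p")
      case True
      have pc: "?p \<in> chains P n" using face_chain[OF s, of i] il L by simp
      have "fr ?p < length ?p" using hc_props(1)[OF pc True] chain_len[OF pc] by simp
      then have "set (dup (fr ?p) ?p) = set ?p" by (rule set_dup)
      then have "dup (fr ?p) ?p \<noteq> t" using cl ct by auto
      then show ?thesis by (simp add: b_def)
    qed (simp add: b_def)
  qed
  have pre_a: "a i = 0" if i: "i < j" for i
  proof -
    let ?D = "dup j s"
    have il: "i < length ?D" using i jl by simp
    have Di: "?D ! i = s ! i" using dup_nth[OF jl, of i] i jl by simp
    have uD: "m = i" if m: "m < length ?D" "?D ! m = ?D ! i" for m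
    proof (cases "m \<le> j")
      case True
      then have "s ! m = s ! i" using m Di dup_nth[OF jl, of m] length_dup[OF jl] by simp
      moreover have "m < length s" using True jl by simp
      ultimately show ?thesis using uniq[OF i] by blast
    next
      case False
      then have "s ! (m - 1) = s ! i" using m Di dup_nth[OF jl, of m] length_dup[OF jl] by simp
      moreover have "m - 1 < length s" using m jl by simp
      ultimately have "m - 1 = i" using uniq[OF i] by blast
      then show ?thesis using False i by simp
    qed
    have "card (set (face i ?D)) < card (set ?D)" using card_lt_face[OF il] uD by blast
    also have "set ?D = set s" using set_dup[OF jl] .
    finally have "face i ?D \<noteq> t" using ct by auto
    then show "a i = 0" by (simp add: a_def)
  qed
  have tail_b: "b i = (if even r \<and> face (Suc i) (dup j s) = t then sg j (sg i u) else 0)"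
    if i: "j + r \<le> i" "i < length s" for i
  proof -
    let ?p = "face i s"
    have pc: "?p \<in> chains P n" using face_chain[OF s, of i] i L by simp
    have lp: "length ?p = Suc n" using chain_len[OF pc] .
    have pk: "?p ! k = s ! k" if "k < i" for k using that i L by (simp add: face_nth)
    have sj: "Suc j < length ?p" using i r2 lp L by simp
    have e1: "?p ! j = s ! j" "?p ! Suc j = s ! Suc j" using pk i r2 by auto
    have kk: "?p ! k \<noteq> ?p ! Suc k" if "k < j" for k
      using pk[of k] pk[of "Suc k"] nbS[OF that] that i r2 by simp
    have frp: "fr ?p = j"
      by (rule fr_eq) (use sj e1 jL kk in auto)
    have ndp: "\<not> distinct ?p"
    proof
      assume "distinct ?p"
      then have "?p ! j \<noteq> ?p ! Suc j" using sj by (simp add: nth_eq_iff_index_eq)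
      then show False using e1 jL by simp
    qed
    have "s ! i \<noteq> s ! j" using run[OF i(2)] i(1) by simp
    then have cnt: "count_list ?p (?p ! j) = r" using count_face[OF i(2), of "s ! j"] e1 by (simp add: r_def)
    have hcp: "hc ?p \<longleftrightarrow> even r" using ndp frp cnt by (simp add: hc_def)
    have dl: "dup j ?p = face (Suc i) (dup j s)" using face_dup_late[of j "Suc i" s] i r2 by simp
    have "th s i u = sg i u" using i r2 by (simp add: th_def)
    then show ?thesis by (simp add: b_def frp hcp dl)
  qed
  have tail: "(if even r then a (Suc i) else 0) + b i = 0" if i: "j + r \<le> i" "i < length s" for i
    using tail_b[OF i] by (auto simp: a_def th_def sg_sg sg_def)
  have run_b: "(\<Sum>i\<in>{j..<j+r}. b i) = (if even r then 0 else (if t = s then u else 0))"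
  proof -
    let ?p = "face j s"
    have fe: "face i s = ?p" if i: "i \<in> {j..<j+r}" for i
    proof (rule face_run_eq)
      show "j \<le> i" "i < length s" using i jr by auto
      fix m assume "j \<le> m" "m \<le> i"
      then show "s ! m = s ! j" using run[of m] i jr by auto
    qed
    have te: "th s i u = sg i u" if i: "i \<in> {j..<j+r}" for i
      using th_run0[OF s u, of i] i jL by auto
    have "(\<Sum>i\<in>{j..<j+r}. b i) = (\<Sum>i\<in>{j..<j+r}.
        if hc ?p \<and> dup (fr ?p) ?p = t then sg (fr ?p) (sg i u) else 0)"
    proof (rule sum.cong[OF refl])
      fix i assume i: "i \<in> {j..<j+r}"
      show "b i = (if hc ?p \<and> dup (fr ?p) ?p = t then sg (fr ?p) (sg i u) else 0)"
        unfolding b_def fe[OF i] te[OF i] ..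
    qed
    also have "\<dots> = (if hc ?p \<and> dup (fr ?p) ?p = t then sg (fr ?p) (\<Sum>i\<in>{j..<j+r}. sg i u) else 0)"
      by (simp only: sum_if_const sg_sum)
    also have "(\<Sum>i\<in>{j..<j+r}. sg i u) = (if even r then 0 else sg j u)" by (rule alt_sum)
    finally have eq: "(\<Sum>i\<in>{j..<j+r}. b i) = (if hc ?p \<and> dup (fr ?p) ?p = t
        then sg (fr ?p) (if even r then 0 else sg j u) else 0)" .
    show ?thesis
    proof (cases "even r")
      case True then show ?thesis using eq by simp
    next
      case False
      then have r3: "3 \<le> r" using r2 by presburger
      have pc: "?p \<in> chains P n" using face_chain[OF s, of j] jl L by simp
      have lp: "length ?p = Suc n" using chain_len[OF pc] .
      have sj: "Suc j < length ?p" using r3 jr L lp by simp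
      have s2: "s ! Suc (Suc j) = s ! j" using run[of "Suc (Suc j)"] r3 jr by simp
      have e1: "?p ! j = s ! j" "?p ! Suc j = s ! j" using jL s2 sj lp L by (simp_all add: face_nth)
      have kk: "?p ! k \<noteq> ?p ! Suc k" if k: "k < j" for k
      proof -
        have "?p ! k = s ! k" using k jl L by (simp add: face_nth)
        moreover have "?p ! Suc k = s ! Suc k"
        proof (cases "Suc k < j")
          case True then show ?thesis using jl L by (simp add: face_nth)
        next
          case False
          then have "Suc k = j" using k by simp
          then show ?thesis using jL L by (simp add: face_nth)
        qed
        ultimately show ?thesis using nbS[OF k] by simp
      qed
      have frp: "fr ?p = j" by (rule fr_eq) (use sj e1 kk in auto)
      have ndp: "\<not> distinct ?p"
      proof
        assume "distinct ?p"
        then have "?p ! j \<noteq> ?p ! Suc j" using sj by (simp add: nth_eq_iff_index_eq)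
        then show False using e1 by simp
      qed
      have cnt: "count_list ?p (?p ! j) = r - 1" using count_face[OF jl, of "s ! j"] e1 by (simp add: r_def)
      have "even (r - 1)" using False r2 by presburger
      then have hcp: "hc ?p" using ndp frp cnt by (simp add: hc_def)
      have dd: "dup (fr ?p) ?p = s" using dup_face[OF jL] frp by simp
      show ?thesis using eq False hcp dd frp by auto
    qed
  qed
  have run_a: "(\<Sum>i\<in>{j..<Suc (j+r)}. a i) = (if t = s then u else 0)" if ev: "even r"
  proof -
    have dc: "dup j s \<in> chains P (Suc (Suc n))" using dup_chain[OF s, of j] jl L by simp
    have fe: "face i (dup j s) = s" if i: "i \<in> {j..<Suc (j+r)}" for i
    proof (rule face_dup_run)
      show "j \<le> i" "i < Suc (length s)" "j < length s" using i jr jl by auto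
      fix m assume "j \<le> m" "m < i"
      then show "s ! m = s ! j" using run[of m] i jr by auto
    qed
    have uD: "sg j u \<in> F (hd (dup j s))" using hd_dup[OF jl] u Fsg th_facts[OF s] by auto
    have te: "th (dup j s) i (sg j u) = sg i (sg j u)" if i: "i \<in> {j..<Suc (j+r)}" for i
    proof (rule th_run0[OF dc uD])
      assume "i = 0"
      then have "j = 0" using i by simp
      then show "dup j s ! 0 = dup j s ! 1" using dup_nth[OF jl, of 0] dup_nth[OF jl, of 1] L by simp
    qed
    have "(\<Sum>i\<in>{j..<Suc (j+r)}. a i) = (\<Sum>i\<in>{j..<j + Suc r}. if s = t then sg j (sg i u) else 0)"
    proof (rule sum.cong)
      show "{j..<Suc (j + r)} = {j..<j + Suc r}" by simp
      fix i assume i: "i \<in> {j..<j + Suc r}"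
      then have i': "i \<in> {j..<Suc (j+r)}" by simp
      show "a i = (if s = t then sg j (sg i u) else 0)"
        unfolding a_def fe[OF i'] te[OF i'] sg_sg by (simp add: add.commute)
    qed
    also have "\<dots> = (if s = t then sg j (\<Sum>i\<in>{j..<j + Suc r}. sg i u) else 0)"
      by (simp only: sum_if_const sg_sum)
    also have "(\<Sum>i\<in>{j..<j + Suc r}. sg i u) = sg j u" using alt_sum[where j=j and r="Suc r" and u=u] ev by simp
    finally show ?thesis by auto
  qed
  have Ls: "{0..Suc n} = {0..<Suc (Suc n)}" "{0..Suc (Suc n)} = {0..<Suc (Suc (Suc n))}" by auto
  have bsplit: "(\<Sum>i\<in>{0..Suc n}. b i) = (\<Sum>i\<in>{0..<j}. b i) + (\<Sum>i\<in>{j..<j+r}. b i)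
      + (\<Sum>i\<in>{j+r..<Suc (Suc n)}. b i)"
    unfolding Ls by (rule split3) (use jr L in auto)
  have asplit: "(\<Sum>i\<in>{0..Suc (Suc n)}. a i) = (\<Sum>i\<in>{0..<j}. a i) + (\<Sum>i\<in>{j..<Suc (j+r)}. a i)
      + (\<Sum>i\<in>{j+r..<Suc (Suc n)}. a (Suc i))"
  proof -
    have "(\<Sum>i\<in>{0..Suc (Suc n)}. a i) = (\<Sum>i\<in>{0..<j}. a i) + (\<Sum>i\<in>{j..<Suc (j+r)}. a i)
      + (\<Sum>i\<in>{Suc (j+r)..<Suc (Suc (Suc n))}. a i)"
      unfolding Ls by (rule split3) (use jr L in auto)
    also have "(\<Sum>i\<in>{Suc (j+r)..<Suc (Suc (Suc n))}. a i) = (\<Sum>i\<in>{j+r..<Suc (Suc n)}. a (Suc i))"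
      by (rule sum.shift_bounds_Suc_ivl)
    finally show ?thesis .
  qed
  have pa: "(\<Sum>i\<in>{0..<j}. a i) = 0" by (rule sum.neutral) (simp add: pre_a)
  have pb: "(\<Sum>i\<in>{0..<j}. b i) = 0" by (rule sum.neutral) (simp add: pre_b)
  show ?thesis
  proof (cases "even r")
    case True
    have "(\<Sum>i\<in>{j+r..<Suc (Suc n)}. a (Suc i)) + (\<Sum>i\<in>{j+r..<Suc (Suc n)}. b i) = 
        (\<Sum>i\<in>{j+r..<Suc (Suc n)}. (if even r then a (Suc i) else 0) + b i)"
      using True by (simp add: sum.distrib)
    also have "\<dots> = 0" by (rule sum.neutral) (use tail L in auto)
    finally have tz: "(\<Sum>i\<in>{j+r..<Suc (Suc n)}. a (Suc i)) + (\<Sum>i\<in>{j+r..<Suc (Suc n)}. b i) = 0" .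
    show ?thesis unfolding A B bsplit asplit pa pb run_a[OF True] run_b
      using True hcs tz by (simp add: algebra_simps)
  next
    case False
    have tz: "(\<Sum>i\<in>{j+r..<Suc (Suc n)}. b i) = 0"
      by (rule sum.neutral) (use tail_b L False in auto)
    show ?thesis unfolding A B bsplit pb run_b using False hcs tz by simp
  qed
qed

end


context shf begin

lemma chfin: "finite (chains P n)" by (rule chains_finite) simp

lemma KI:
  assumes z: "z \<in> DS (Suc n)" and bz: "bdry scale P R (Suc n) z = 0"
    and sup: "\<And>s. z s \<noteq> 0 \<Longrightarrow> card (set s) \<le> p" and tp: "p \<le> card (set t)"
  shows "bdry scale P R (Suc (Suc n)) (Hm (Suc n) z) t = z t"
proof -
  have zC: "z \<in> C (Suc n)" using z DS_C by blast
  let ?X = "chains P (Suc n)"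
  have ze: "z = (\<Sum>s\<in>?X. el s (z s))" by (rule C_el_sum[OF zC])
  have elC: "\<And>s. s \<in> ?X \<Longrightarrow> el s (z s) \<in> C (Suc n)" using el_C cs_in[OF zC] by blast
  have e1: "bdry scale P R (Suc (Suc n)) (Hm (Suc n) z)
      = (\<Sum>s\<in>?X. bdry scale P R (Suc (Suc n)) (Hm (Suc n) (el s (z s))))"
  proof -
    have h: "Hm (Suc n) z = (\<Sum>s\<in>?X. Hm (Suc n) (el s (z s)))"
      by (subst ze) (rule Hm_sum)
    show ?thesis unfolding h by (rule bdry_sum[OF chfin Hm_C[OF elC]])
  qed
  have e2: "Hm n (bdry scale P R (Suc n) z) = (\<Sum>s\<in>?X. Hm n (bdry scale P R (Suc n) (el s (z s))))"
  proof -
    have "bdry scale P R (Suc n) z = (\<Sum>s\<in>?X. bdry scale P R (Suc n) (el s (z s)))"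
      by (subst ze) (rule bdry_sum[OF chfin elC])
    then show ?thesis by (simp add: Hm_sum)
  qed
  have per: "bdry scale P R (Suc (Suc n)) (Hm (Suc n) (el s (z s))) t
       + Hm n (bdry scale P R (Suc n) (el s (z s))) t = (if t = s then z s else 0)" if s: "s \<in> ?X" for s
  proof (cases "z s = 0")
    case True
    then show ?thesis by simp
  next
    case False
    have nd: "\<not> distinct s" using False z s by (auto simp: SP_def)
    have "card (set s) \<le> card (set t)" using sup[OF False] tp by simp
    then show ?thesis using phi_el[OF s nd cs_in[OF zC s]] by simp
  qed
  have "bdry scale P R (Suc (Suc n)) (Hm (Suc n) z) t
      = bdry scale P R (Suc (Suc n)) (Hm (Suc n) z) t + Hm n (bdry scale P R (Suc n) z) t"
    using bz by simp
  also have "\<dots> = (\<Sum>s\<in>?X. bdry scale P R (Suc (Suc n)) (Hm (Suc n) (el s (z s))) t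
       + Hm n (bdry scale P R (Suc n) (el s (z s))) t)"
    unfolding e1 e2 sum_apply_fun by (simp add: sum.distrib)
  also have "\<dots> = (\<Sum>s\<in>?X. if t = s then z s else 0)" by (rule sum.cong[OF refl per])
  also have "\<dots> = z t" using cs_out[OF zC, of t] by (simp add: chains_finite)
  finally show ?thesis .
qed

lemma DS0: "z \<in> DS 0 \<Longrightarrow> z = 0"
proof (rule ext)
  fix s assume z: "z \<in> DS 0"
  have "s \<notin> Dc 0" by (auto simp: chains_def length_Suc_conv)
  then show "z s = 0 s" using z by (simp add: SP_def)
qed

lemma D_acyc:
  assumes z: "z \<in> DS m" and bz: "bdry scale P R m z = 0"
  shows "z \<in> bdry scale P R (Suc m) ` DS (Suc m)"
proof (cases m)
  case 0
  then have "z = 0" using DS0 z by simp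
  moreover have "0 \<in> DS (Suc m)" using V.subspace_0[OF DS_sub] .
  ultimately show ?thesis by (metis bdry_zero image_eqI)
next
  case (Suc n)
  have main: "\<forall>z. z \<in> DS (Suc n) \<longrightarrow> bdry scale P R (Suc n) z = 0 \<longrightarrow>
      (\<forall>s. z s \<noteq> 0 \<longrightarrow> card (set s) \<le> p) \<longrightarrow> z \<in> bdry scale P R (Suc (Suc n)) ` DS (Suc (Suc n))" for p
  proof (induction p)
    case 0
    show ?case
    proof (intro allI impI)
      fix z assume z: "z \<in> DS (Suc n)" and sp: "\<forall>s. z s \<noteq> 0 \<longrightarrow> card (set s) \<le> 0"
      have "z = 0"
      proof (rule ext)
        fix s show "z s = 0 s"
        proof (rule ccontr)
          assume "z s \<noteq> 0 s"
          then have "z s \<noteq> 0" by simp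
          then have "s \<in> chains P (Suc n)" "set s = {}" using z sp by (auto simp: SP_def)
          then show False by (auto simp: chains_def)
        qed
      qed
      moreover have "0 \<in> DS (Suc (Suc n))" using V.subspace_0[OF DS_sub] .
      ultimately show "z \<in> bdry scale P R (Suc (Suc n)) ` DS (Suc (Suc n))" by (metis bdry_zero image_eqI)
    qed
  next
    case (Suc p)
    show ?case
    proof (intro allI impI)
      fix z assume z: "z \<in> DS (Suc n)" and bz: "bdry scale P R (Suc n) z = 0"
        and sp: "\<forall>s. z s \<noteq> 0 \<longrightarrow> card (set s) \<le> Suc p"
      have zC: "z \<in> C (Suc n)" using z DS_C by blast
      define w0 where "w0 = Hm (Suc n) z"
      have w0D: "w0 \<in> DS (Suc (Suc n))" unfolding w0_def by (rule Hm_DS[OF zC])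
      have w0C: "w0 \<in> C (Suc (Suc n))" using w0D DS_C by blast
      have bw0D: "bdry scale P R (Suc (Suc n)) w0 \<in> DS (Suc n)" by (rule bdry_DS[OF w0D])
      have bw0C: "bdry scale P R (Suc (Suc n)) w0 \<in> C (Suc n)" using bw0D DS_C by blast
      define z' where "z' = z - bdry scale P R (Suc (Suc n)) w0"
      have z'D: "z' \<in> DS (Suc n)" unfolding z'_def using V.subspace_diff[OF DS_sub z bw0D] .
      have bz': "bdry scale P R (Suc n) z' = 0"
        unfolding z'_def bdry_diff[OF zC bw0C] bz bdry_bdry[OF w0C] by simp
      have sp': "\<forall>s. z' s \<noteq> 0 \<longrightarrow> card (set s) \<le> p"
      proof (intro allI impI, rule ccontr)
        fix s assume ne: "z' s \<noteq> 0" and "\<not> card (set s) \<le> p"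
        then have "Suc p \<le> card (set s)" by simp
        then have "bdry scale P R (Suc (Suc n)) w0 s = z s"
          unfolding w0_def using KI[OF z bz, of "Suc p" s] sp by blast
        then show False using ne by (simp add: z'_def)
      qed
      obtain w' where w': "w' \<in> DS (Suc (Suc n))" "z' = bdry scale P R (Suc (Suc n)) w'"
        using Suc.IH z'D bz' sp' by blast
      have w'C: "w' \<in> C (Suc (Suc n))" using w' DS_C by blast
      have "z = bdry scale P R (Suc (Suc n)) w0 + z'" by (simp add: z'_def)
      also have "\<dots> = bdry scale P R (Suc (Suc n)) (w0 + w')" using bdry_add[OF w0C w'C] w' by simp
      finally show "z \<in> bdry scale P R (Suc (Suc n)) ` DS (Suc (Suc n))"
        using V.subspace_add[OF DS_sub w0D w'(1)] by blast
    qed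
  qed
  have "\<forall>s. z s \<noteq> 0 \<longrightarrow> card (set s) \<le> card (UNIV :: 'a set)"
    by (auto intro: card_mono)
  then show ?thesis using main[of "card (UNIV :: 'a set)"] z bz Suc by blast
qed

end


context vector_space begin

lemma ker_sub:
  assumes X: "subspace X" and add: "\<And>x y. x \<in> X \<Longrightarrow> y \<in> X \<Longrightarrow> f (x + y) = f x + f y"
    and sc: "\<And>x a. x \<in> X \<Longrightarrow> f (a *s x) = a *s f x"
  shows "subspace {x \<in> X. f x = 0}"
proof -
  have f0: "f 0 = 0" using add[of 0 0] subspace_0[OF X] by simp
  show ?thesis unfolding subspace_def
    using subspace_0[OF X] subspace_add[OF X] subspace_scale[OF X] add sc f0 by auto
qed

lemma img_sub:
  assumes X: "subspace X" and add: "\<And>x y. x \<in> X \<Longrightarrow> y \<in> X \<Longrightarrow> f (x + y) = f x + f y"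
    and sc: "\<And>x a. x \<in> X \<Longrightarrow> f (a *s x) = a *s f x"
  shows "subspace (f ` X)"
proof -
  have f0: "f 0 = 0" using add[of 0 0] subspace_0[OF X] by simp
  show ?thesis unfolding subspace_def
  proof (intro conjI ballI allI)
    show "0 \<in> f ` X" using f0 subspace_0[OF X] by (metis image_eqI)
    fix x y assume "x \<in> f ` X" "y \<in> f ` X"
    then obtain a b where "a \<in> X" "b \<in> X" "x = f a" "y = f b" by blast
    then show "x + y \<in> f ` X" using add subspace_add[OF X] by (metis image_eqI)
  next
    fix c x assume "x \<in> f ` X"
    then obtain a where "a \<in> X" "x = f a" by blast
    then show "c *s x \<in> f ` X" using sc subspace_scale[OF X] by (metis image_eqI)
  qed
qed

lemma dim_zero_sp: "dim {0} = 0"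
  using dim_unique[of "{}" "{0}" 0] by (simp add: independent_empty)

end

lemma telescope:
  fixes z b c :: "nat \<Rightarrow> int"
  assumes "\<And>n. c n = z n + b n" "b 0 = 0"
  shows "(\<Sum>n<M. (-1) ^ n * (z n - b (Suc n))) = (\<Sum>n<M. (-1) ^ n * c n) + (-1) ^ M * b M"
proof (induction M)
  case 0 then show ?case using assms by simp
next
  case (Suc M)
  then show ?case using assms(1)[of M] by (simp add: algebra_simps)
qed

context shf begin

lemma bdry_NS': "c \<in> NS n \<Longrightarrow> bdry scale P R n c \<in> NS (n - 1)"
  by (cases n) (auto simp: bdry_NS V.subspace_0[OF NS_sub])
lemma bdry_DS': "c \<in> DS n \<Longrightarrow> bdry scale P R n c \<in> DS (n - 1)"
  by (cases n) (auto simp: bdry_DS V.subspace_0[OF DS_sub])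

lemma sub_fin: "X \<subseteq> C n \<Longrightarrow> \<exists>A. finite A \<and> X \<subseteq> V.span A"
  using C_fin[of n] by blast

lemma ker_sub': "V.subspace X \<Longrightarrow> X \<subseteq> C n \<Longrightarrow> V.subspace {c \<in> X. bdry scale P R n c = 0}"
  by (rule V.ker_sub) (auto intro!: bdry_add bdry_scale)
lemma img_sub': "V.subspace X \<Longrightarrow> X \<subseteq> C n \<Longrightarrow> V.subspace (bdry scale P R n ` X)"
  by (rule V.img_sub) (auto intro!: bdry_add bdry_scale)

lemma bdry_img_C: "bdry scale P R (Suc n) ` X \<subseteq> C n" if "X \<subseteq> C (Suc n)"
  using bdry_C that by blast

definition hsN :: "nat \<Rightarrow> int" where
  "hsN n = int (V.dim {c \<in> NS n. bdry scale P R n c = 0})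
         - int (V.dim (bdry scale P R (Suc n) ` NS (Suc n)))"

lemma HS_eq: "HS_dim scale P F R n = hsN n"
proof -
  let ?d = "bdry scale P R"
  let ?ZC = "{c \<in> C n. ?d n c = 0}" and ?ZN = "{c \<in> NS n. ?d n c = 0}" and ?ZD = "{c \<in> DS n. ?d n c = 0}"
  let ?BC = "?d (Suc n) ` C (Suc n)" and ?BN = "?d (Suc n) ` NS (Suc n)" and ?BD = "?d (Suc n) ` DS (Suc n)"
  have Z: "?ZC = {u + w | u w. u \<in> ?ZN \<and> w \<in> ?ZD}"
  proof
    show "?ZC \<subseteq> {u + w | u w. u \<in> ?ZN \<and> w \<in> ?ZD}"
    proof
      fix c assume c: "c \<in> ?ZC"
      then have cC: "c \<in> C n" by simp
      define cN where "cN = (\<lambda>s. if distinct s then c s else 0)"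
      define cD where "cD = (\<lambda>s. if distinct s then 0 else c s)"
      have N: "cN \<in> NS n" and D: "cD \<in> DS n" and e: "c = cN + cD"
        using C_split[OF cC] by (simp_all add: cN_def cD_def)
      have "?d n c = ?d n cN + ?d n cD" using e bdry_add[of cN n cD] N D NS_C DS_C by auto
      then have e2: "?d n cN = - ?d n cD" using c by (simp add: eq_neg_iff_add_eq_0)
      have "?d n cN \<in> DS (n - 1)" unfolding e2 using V.subspace_neg[OF DS_sub bdry_DS'[OF D]] .
      then have z1: "?d n cN = 0" using ND_int bdry_NS'[OF N] by blast
      then have z2: "?d n cD = 0" using e2 by simp
      show "c \<in> {u + w | u w. u \<in> ?ZN \<and> w \<in> ?ZD}" using e N D z1 z2 by blast
    qed
  next
    show "{u + w | u w. u \<in> ?ZN \<and> w \<in> ?ZD} \<subseteq> ?ZC"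
    proof
      fix x assume "x \<in> {u + w | u w. u \<in> ?ZN \<and> w \<in> ?ZD}"
      then obtain u w where x: "x = u + w" "u \<in> NS n" "w \<in> DS n" "?d n u = 0" "?d n w = 0" by blast
      have "u \<in> C n" "w \<in> C n" using x NS_C DS_C by auto
      then show "x \<in> ?ZC" using x bdry_add V.subspace_add[OF C_sub] by auto
    qed
  qed
  have Bq: "?BC = {u + w | u w. u \<in> ?BN \<and> w \<in> ?BD}"
  proof
    show "?BC \<subseteq> {u + w | u w. u \<in> ?BN \<and> w \<in> ?BD}"
    proof
      fix x assume "x \<in> ?BC"
      then obtain c where c: "c \<in> C (Suc n)" "x = ?d (Suc n) c" by blast
      define cN where "cN = (\<lambda>s. if distinct s then c s else 0)"
      define cD where "cD = (\<lambda>s. if distinct s then 0 else c s)"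
      have N: "cN \<in> NS (Suc n)" and D: "cD \<in> DS (Suc n)" and e: "c = cN + cD"
        using C_split[OF c(1)] by (simp_all add: cN_def cD_def)
      have "x = ?d (Suc n) cN + ?d (Suc n) cD" using c e bdry_add[of cN "Suc n" cD] N D NS_C DS_C by auto
      then show "x \<in> {u + w | u w. u \<in> ?BN \<and> w \<in> ?BD}" using N D by blast
    qed
  next
    show "{u + w | u w. u \<in> ?BN \<and> w \<in> ?BD} \<subseteq> ?BC"
    proof
      fix x assume "x \<in> {u + w | u w. u \<in> ?BN \<and> w \<in> ?BD}"
      then obtain a b where x: "x = ?d (Suc n) a + ?d (Suc n) b" "a \<in> NS (Suc n)" "b \<in> DS (Suc n)" by blast
      have ab: "a \<in> C (Suc n)" "b \<in> C (Suc n)" using x NS_C DS_C by auto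
      then have "x = ?d (Suc n) (a + b)" using x bdry_add by simp
      then show "x \<in> ?BC" using V.subspace_add[OF C_sub ab] by blast
    qed
  qed
  have ZDBD: "?ZD = ?BD"
  proof
    show "?ZD \<subseteq> ?BD" using D_acyc by blast
    show "?BD \<subseteq> ?ZD"
    proof
      fix x assume "x \<in> ?BD"
      then obtain w where w: "w \<in> DS (Suc n)" "x = ?d (Suc n) w" by blast
      then show "x \<in> ?ZD" using bdry_DS[OF w(1)] bdry_bdry[of w n] DS_C by auto
    qed
  qed
  have sZN: "V.subspace ?ZN" by (rule ker_sub'[OF NS_sub NS_C])
  have sZD: "V.subspace ?ZD" by (rule ker_sub'[OF DS_sub DS_C])
  have sBN: "V.subspace ?BN" by (rule img_sub'[OF NS_sub NS_C])
  have sBD: "V.subspace ?BD" by (rule img_sub'[OF DS_sub DS_C])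
  obtain A0 where A0: "finite A0" "?ZN \<subseteq> V.span A0" using sub_fin[of ?ZN n] NS_C by blast
  obtain A1 where A1: "finite A1" "?ZD \<subseteq> V.span A1" using sub_fin[of ?ZD n] DS_C by blast
  obtain A2 where A2: "finite A2" "?BN \<subseteq> V.span A2" using sub_fin[of ?BN n] bdry_img_C[of "NS (Suc n)"] NS_C by blast
  obtain A3 where A3: "finite A3" "?BD \<subseteq> V.span A3" using sub_fin[of ?BD n] bdry_img_C[of "DS (Suc n)"] DS_C by blast
  have i1: "?ZN \<inter> ?ZD \<subseteq> {0}"
  proof
    fix x assume "x \<in> ?ZN \<inter> ?ZD"
    then have "x \<in> NS n" "x \<in> DS n" by auto
    then show "x \<in> {0}" using ND_int by simp
  qed
  have i2: "?BN \<inter> ?BD \<subseteq> {0}"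
  proof
    fix x assume x: "x \<in> ?BN \<inter> ?BD"
    then obtain a b where ab: "a \<in> NS (Suc n)" "x = ?d (Suc n) a" "b \<in> DS (Suc n)" "x = ?d (Suc n) b"
      by (auto simp del: bdry_pt)
    have "x \<in> NS n" using bdry_NS[OF ab(1)] ab(2) by simp
    moreover have "x \<in> DS n" using bdry_DS[OF ab(3)] ab(4) by simp
    ultimately show "x \<in> {0}" using ND_int by simp
  qed
  have d1: "V.dim ?ZC = V.dim ?ZN + V.dim ?ZD"
    unfolding Z by (rule V.dim_direct_sum[OF sZN sZD i1 A0(2,1) A1(2,1)])
  have d2: "V.dim ?BC = V.dim ?BN + V.dim ?BD"
    unfolding Bq by (rule V.dim_direct_sum[OF sBN sBD i2 A2(2,1) A3(2,1)])
  show ?thesis unfolding HS_dim_def hsN_def d1 d2 ZDBD by simp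
qed

lemma NS_big: "card P \<le> n \<Longrightarrow> NS n = {0}"
proof -
  assume n: "card P \<le> n"
  have "Nc n = {}"
  proof (rule ccontr)
    assume "Nc n \<noteq> {}"
    then obtain s where s: "s \<in> chains P n" "distinct s" by blast
    then have "card (set s) = Suc n" using distinct_card chain_len by metis
    moreover have "card (set s) \<le> card P" using s by (intro card_mono) (auto simp: chains_def)
    ultimately show False using n by simp
  qed
  then show ?thesis by (auto simp: SP_def)
qed

lemma rnN: "V.dim (NS n) = V.dim {c \<in> NS n. bdry scale P R n c = 0} + V.dim (bdry scale P R n ` NS n)"
proof -
  obtain A where "finite A" "NS n \<subseteq> V.span A" using sub_fin[of "NS n" n] NS_C by blast
  then show ?thesis
    by (intro V.rank_nullity[OF NS_sub]) (use NS_C in \<open>auto intro!: bdry_add bdry_scale\<close>)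
qed

lemma euler_N:
  "euler_char_HS scale P F R = (\<Sum>n<card P. (-1) ^ n * int (V.dim (NS n)))"
proof -
  let ?M = "card P"
  define z where "z n = int (V.dim {c \<in> NS n. bdry scale P R n c = 0})" for n
  define b where "b n = int (V.dim (bdry scale P R n ` NS n))" for n
  define c where "c n = int (V.dim (NS n))" for n
  have cz: "c n = z n + b n" for n using rnN[of n] by (simp add: c_def z_def b_def)
  have b0: "b 0 = 0"
  proof -
    have "bdry scale P R 0 ` NS 0 = {0}" using V.subspace_0[OF NS_sub] by auto
    then show ?thesis by (simp add: b_def V.dim_zero_sp)
  qed
  have big: "z n = 0 \<and> b n = 0" if "?M \<le> n" for n
  proof -
    have "c n = 0" using NS_big[OF that] by (simp add: c_def V.dim_zero_sp)
    then show ?thesis using cz[of n] by (simp add: z_def b_def)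
  qed
  have hs: "HS_dim scale P F R n = z n - b (Suc n)" for n by (simp add: HS_eq hsN_def z_def b_def)
  have sub: "{n. HS_dim scale P F R n \<noteq> 0} \<subseteq> {..<?M}"
  proof
    fix n assume "n \<in> {n. HS_dim scale P F R n \<noteq> 0}"
    then have "z n - b (Suc n) \<noteq> 0" using hs by simp
    then show "n \<in> {..<?M}" using big[of n] big[of "Suc n"] by (cases "?M \<le> n") auto
  qed
  have "euler_char_HS scale P F R = (\<Sum>n<?M. (-1) ^ n * HS_dim scale P F R n)"
    unfolding euler_char_HS_def by (rule sum.mono_neutral_left) (use sub in auto)
  also have "\<dots> = (\<Sum>n<?M. (-1) ^ n * (z n - b (Suc n)))" by (simp add: hs)
  also have "\<dots> = (\<Sum>n<?M. (-1) ^ n * c n) + (-1) ^ ?M * b ?M" by (rule telescope[where c=c and z=z and b=b, OF cz b0])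
  also have "b ?M = 0" using big[of ?M] by simp
  finally show ?thesis by (simp add: c_def)
qed

end


declare mobius.simps[simp del]

definition ALLc :: "'a::{finite,order} set \<Rightarrow> 'a list set" where
  "ALLc P = {s. s \<noteq> [] \<and> distinct s \<and> desc s \<and> set s \<subseteq> P}"

lemma ALL_fin: "finite (ALLc P)"
proof -
  have "ALLc P \<subseteq> {xs. set xs \<subseteq> UNIV \<and> length xs \<le> card (UNIV :: 'a set)}"
    by (auto simp: ALLc_def distinct_card[symmetric] intro!: card_mono[OF finite_UNIV subset_UNIV])
  moreover have "finite {xs. set xs \<subseteq> (UNIV :: 'a set) \<and> length xs \<le> card (UNIV :: 'a set)}"
    by (rule finite_lists_length_le) simp
  ultimately show ?thesis by (rule finite_subset)
qed

lemma ALL_len: "s \<in> ALLc P \<Longrightarrow> length s \<le> card P"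
  unfolding ALLc_def by (metis (mono_tags, lifting) card_mono distinct_card finite mem_Collect_eq)

lemma Nc_ALL: "{s \<in> chains P n. distinct s} = {s \<in> ALLc P. length s = Suc n}"
  by (auto simp: ALLc_def chains_def)

lemma ALL_union: "ALLc P = (\<Union>n<card P. {s \<in> chains P n. distinct s})"
proof -
  have "s \<in> ALLc P \<longleftrightarrow> (\<exists>n<card P. s \<in> {s \<in> ALLc P. length s = Suc n})" for s
  proof
    assume s: "s \<in> ALLc P"
    then have l: "length s \<le> card P" using ALL_len by auto
    obtain n where n: "length s = Suc n" using s by (cases s) (auto simp: ALLc_def)
    then show "\<exists>n<card P. s \<in> {s \<in> ALLc P. length s = Suc n}" using s l by auto
  qed auto
  then show ?thesis unfolding Nc_ALL by blast
qed

definition gch :: "'a::{finite,order} set \<Rightarrow> 'a \<Rightarrow> int" where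
  "gch P x = (\<Sum>s\<in>{s \<in> ALLc P. hd s = x}. (-1) ^ (length s - 1))"

lemma ALL_hd_split:
  assumes x: "x \<in> P"
  shows "{s \<in> ALLc P. hd s = x} = insert [x] ((\<lambda>t. x # t) ` {t \<in> ALLc P. hd t < x})"
proof (intro equalityI subsetI)
  fix s assume s: "s \<in> {s \<in> ALLc P. hd s = x}"
  then obtain t where st: "s = x # t" by (cases s) (auto simp: ALLc_def)
  show "s \<in> insert [x] ((\<lambda>t. x # t) ` {t \<in> ALLc P. hd t < x})"
  proof (cases "t = []")
    case True then show ?thesis using st by simp
  next
    case False
    have "hd t \<in> set t" using False by simp
    then have "hd t \<le> x" "hd t \<noteq> x" using s st by (auto simp: ALLc_def)
    then have "hd t < x" by simp
    moreover have "t \<in> ALLc P" using s st False by (auto simp: ALLc_def)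
    ultimately show ?thesis using st by blast
  qed
next
  fix s assume s: "s \<in> insert [x] ((\<lambda>t. x # t) ` {t \<in> ALLc P. hd t < x})"
  show "s \<in> {s \<in> ALLc P. hd s = x}"
  proof (cases "s = [x]")
    case True then show ?thesis using x by (simp add: ALLc_def)
  next
    case False
    then obtain t where t: "s = x # t" "t \<in> ALLc P" "hd t < x" using s by blast
    obtain a t' where at: "t = a # t'" using t(2) by (cases t) (auto simp: ALLc_def)
    have le: "\<forall>y\<in>set t. y \<le> a" using t(2) at by (auto simp: ALLc_def)
    have "\<forall>y\<in>set t. y < x" using le t(3) at by (auto intro: order.strict_trans1)
    then show ?thesis using t x by (auto simp: ALLc_def)
  qed
qed

lemma gch_rec:
  assumes x: "x \<in> P"
  shows "gch P x = 1 - (\<Sum>y\<in>{y \<in> P. y < x}. gch P y)"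
proof -
  let ?T = "{t \<in> ALLc P. hd t < x}"
  have fin: "finite ?T" by (rule finite_subset[OF _ ALL_fin]) auto
  have nin: "[x] \<notin> (\<lambda>t. x # t) ` ?T" by (auto simp: ALLc_def)
  have inj: "inj_on (\<lambda>t. x # t) ?T" by (auto intro: inj_onI)
  have "gch P x = 1 + (\<Sum>t\<in>?T. (-1) ^ (length (x # t) - 1))"
    unfolding gch_def ALL_hd_split[OF x] using fin nin inj by (simp add: sum.reindex)
  also have "(\<Sum>t\<in>?T. (-1) ^ (length (x # t) - 1)) = (\<Sum>t\<in>?T. - ((-1) ^ (length t - 1) :: int))"
  proof (rule sum.cong[OF refl])
    fix t assume "t \<in> ?T"
    then obtain k where k: "length t = Suc k" by (cases t) (auto simp: ALLc_def)
    then show "(-1) ^ (length (x # t) - 1) = - ((-1) ^ (length t - 1) :: int)" by simp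
  qed
  also have "\<dots> = - (\<Sum>t\<in>?T. (-1) ^ (length t - 1))" by (simp add: sum_negf)
  also have "(\<Sum>t\<in>?T. (-1) ^ (length t - 1)) = (\<Sum>y\<in>{y \<in> P. y < x}. \<Sum>t\<in>{t \<in> ?T. hd t = y}. (-1) ^ (length t - 1))"
  proof (rule sum.group[symmetric])
    show "finite ?T" by (rule fin)
    show "finite {y \<in> P. y < x}" by simp
    show "hd ` ?T \<subseteq> {y \<in> P. y < x}"
      by (auto simp: ALLc_def)
  qed
  also have "\<dots> = (\<Sum>y\<in>{y \<in> P. y < x}. gch P y)"
    unfolding gch_def by (intro sum.cong refl) auto
  finally show ?thesis by simp
qed

lemma mobius_rec:
  fixes x :: "'a::{finite, bounded_lattice_bot}"
  assumes x: "x \<noteq> bot"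
  shows "mobius bot x = - 1 - (\<Sum>z\<in>{z \<in> UNIV - {bot}. z < x}. mobius bot z)"
proof -
  have bx: "bot < x" using x by (simp add: bot.not_eq_extremum)
  have "mobius bot x = - (\<Sum>z\<in>{z. bot \<le> z \<and> z < x}. mobius bot z)"
    using x bx by (subst mobius.simps) simp
  also have "{z. bot \<le> z \<and> z < x} = insert bot {z \<in> UNIV - {bot}. z < x}" using bx by auto
  also have "(\<Sum>z\<in>insert bot {z \<in> UNIV - {bot}. z < x}. mobius bot z)
      = mobius (bot::'a) bot + (\<Sum>z\<in>{z \<in> UNIV - {bot}. z < x}. mobius bot z)" by (simp add: sum.insert)
  also have "mobius bot (bot::'a) = 1" using mobius.simps[of "bot::'a" "bot"] by simp
  finally show ?thesis by simp
qed

lemma gch_mobius: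
  fixes x :: "'a::{finite, bounded_lattice_bot}"
  shows "x \<noteq> bot \<Longrightarrow> gch (UNIV - {bot}) x = - mobius bot x"
proof (induction x rule: measure_induct_rule[where f="\<lambda>x. card {w. w < x}"])
  case (less x)
  have IH: "\<And>y. y < x \<Longrightarrow> y \<noteq> bot \<Longrightarrow> gch (UNIV - {bot}) y = - mobius bot y"
  proof -
    fix y :: 'a assume "y < x" "y \<noteq> bot"
    have "{w. w < y} \<subset> {w. w < x}" using \<open>y < x\<close> by (auto dest: order.strict_trans)
    then have "card {w. w < y} < card {w. w < x}" by (rule psubset_card_mono[OF finite])
    then show "gch (UNIV - {bot}) y = - mobius bot y" using less.IH \<open>y \<noteq> bot\<close> by blast
  qed
  have "gch (UNIV - {bot}) x = 1 - (\<Sum>y\<in>{y \<in> UNIV - {bot}. y < x}. gch (UNIV - {bot}) y)"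
    using gch_rec[of x "UNIV - {bot}"] less.prems by simp
  also have "(\<Sum>y\<in>{y \<in> UNIV - {bot}. y < x}. gch (UNIV - {bot}) y)
      = (\<Sum>y\<in>{y \<in> UNIV - {bot}. y < x}. - mobius bot y)" using IH by (intro sum.cong) auto
  finally show ?case using mobius_rec[OF less.prems] by (simp add: sum_negf)
qed

context shf begin

lemma euler_formula: "euler_char_HS scale P F R = (\<Sum>x\<in>P. int (B.dim (F x)) * gch P x)"
proof -
  let ?D = "\<lambda>s. int (B.dim (F (hd s)))"
  have "euler_char_HS scale P F R = (\<Sum>n<card P. (-1) ^ n * int (V.dim (NS n)))" by (rule euler_N)
  also have "\<dots> = (\<Sum>n<card P. \<Sum>s\<in>{s \<in> chains P n. distinct s}. (-1) ^ (length s - 1) * ?D s)"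
  proof (rule sum.cong[OF refl])
    fix n
    have "V.dim (NS n) = (\<Sum>s\<in>Nc n. B.dim (F (hd s)))" by (rule SP_dim) (auto simp: chfin chain_hdP)
    then have "(-1) ^ n * int (V.dim (NS n)) = (\<Sum>s\<in>Nc n. (-1) ^ n * ?D s)"
      by (simp add: sum_distrib_left)
    also have "\<dots> = (\<Sum>s\<in>Nc n. (-1) ^ (length s - 1) * ?D s)"
      by (intro sum.cong refl) (auto simp: chain_len)
    finally show "(-1) ^ n * int (V.dim (NS n)) = (\<Sum>s\<in>Nc n. (-1) ^ (length s - 1) * ?D s)" .
  qed
  also have "\<dots> = (\<Sum>s\<in>ALLc P. (-1) ^ (length s - 1) * ?D s)"
    unfolding ALL_union
    apply (rule sum.UNION_disjoint[symmetric])
      apply simp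
     apply (simp add: chfin)
    apply (auto simp: chains_def)
    done
  also have "\<dots> = (\<Sum>x\<in>P. \<Sum>s\<in>{s \<in> ALLc P. hd s = x}. (-1) ^ (length s - 1) * ?D s)"
    apply (rule sum.group[symmetric])
      apply (rule ALL_fin)
     apply simp
    apply (auto simp: ALLc_def)
    done
  also have "\<dots> = (\<Sum>x\<in>P. int (B.dim (F x)) * gch P x)"
    unfolding gch_def sum_distrib_left by (intro sum.cong refl) (simp add: mult.commute)
  finally show ?thesis .
qed

end

theorem proposition2:
  fixes scale :: "'k::field \<Rightarrow> 'v::ab_group_add \<Rightarrow> 'v"
    and F :: "'a::{finite, bounded_lattice_bot} \<Rightarrow> 'v set"
    and R :: "'a \<Rightarrow> 'a \<Rightarrow> 'v \<Rightarrow> 'v"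
  assumes "is_sheaf scale (UNIV - {bot}) F R"
    and "finite_dim_stalks scale (UNIV - {bot}) F"
  shows "euler_char_HS scale (UNIV - {bot}) F R
           = - (\<Sum>x\<in>UNIV - {bot}. mobius bot x * int (Vector_Spaces.vector_space.dim scale (F x)))"
proof -
  interpret shf scale "UNIV - {bot}" F R using assms by unfold_locales
  have "euler_char_HS scale (UNIV - {bot}) F R
      = (\<Sum>x\<in>UNIV - {bot}. int (B.dim (F x)) * gch (UNIV - {bot}) x)" by (rule euler_formula)
  also have "\<dots> = (\<Sum>x\<in>UNIV - {bot}. - (mobius bot x * int (B.dim (F x))))"
    by (intro sum.cong refl) (auto simp: gch_mobius)
  also have "\<dots> = - (\<Sum>x\<in>UNIV - {bot}. mobius bot x * int (B.dim (F x)))" by (simp add: sum_negf)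
  finally show ?thesis .
qed


end
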